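(* Let $d_1,d_2\in\mathbb{N}$ with $2\leq d_1\leq d_2$. Let $\omega_d$ denote the maximally entangled projector on $\mathbb{C}^d\otimes\mathbb{C}^d$ and define on $\mathbb{C}^{d_1}\otimes\mathbb{C}^{d_1}\otimes\mathbb{C}^{d_2}\otimes\mathbb{C}^{d_2}$ (factors labelled $A_1,B_1,A_2,B_2$) \[ Z = (\mathbb{1}-\omega_{d_1})_{A_1B_1}\otimes(\mathbb{1}-\omega_{d_2})_{A_2B_2} + (d_1-1)(d_2+1)\,(\omega_{d_1})_{A_1B_1}\otimes(\omega_{d_2})_{A_2B_2}. \] With respect to the bipartition $A=A_1A_2$, $B=B_1B_2$, $Z$ is positive semidefinite and PPT, its partial transpose $Z^\Gamma$ (transposition on $B_1B_2$) satisfies $\mathrm{SN}(Z^\Gamma)\leq 4$, and hence \[ \mathrm{SN}(Z)-\mathrm{SN}(Z^\Gamma)\geq\lceil d_2/d_1\rceil - 4. \]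
   Context: $\omega_d=\ket{\Omega_d}\bra{\Omega_d}$, $\ket{\Omega_d}=\frac{1}{\sqrt d}\sum_{i=1}^d\ket{i}\otimes\ket{i}$. PPT means the partial transpose (transposition in the computational basis on the $B$ system) is positive semidefinite. The Schmidt rank of $\ket{\psi}\in\mathbb{C}^{d_A}\otimes\mathbb{C}^{d_B}$ is the rank of $\mathrm{tr}_A\ket{\psi}\bra{\psi}$; for a nonzero positive semidefinite $\rho$, $\mathrm{SN}(\rho)$ is the minimum over decompositions $\rho=\sum_ip_i\ket{\psi_i}\bra{\psi_i}$ ($p_i>0$) of the maximal Schmidt rank of the $\ket{\psi_i}$, computed with respect to the bipartition $A:B$. *)

theory Defs
  imports "Jordan_Normal_Form.DL_Rank" "Jordan_Normal_Form.Conjugate" Complex_Main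
begin

text \<open>Conventions. A bipartite system C^dA (x) C^dB is represented by vectors/matrices of
  dimension dA*dB; the product basis vector |a>|b> has global index a*dB + b.\<close>

definition ketbra :: "complex vec \<Rightarrow> complex vec \<Rightarrow> complex mat" where
  "ketbra v w = mat (dim_vec v) (dim_vec w) (\<lambda>(i,j). v $ i * cnj (w $ j))"

definition psd :: "nat \<Rightarrow> complex mat \<Rightarrow> bool" where
  "psd n A \<longleftrightarrow> A \<in> carrier_mat n n \<and>
     (\<forall>v \<in> carrier_vec n. Im (conjugate v \<bullet> (A *\<^sub>v v)) = 0 \<and> Re (conjugate v \<bullet> (A *\<^sub>v v)) \<ge> 0)"

text \<open>Partial transpose (transposition in the computational basis of B):
  rho^Gamma[(a,b),(a',b')] = rho[(a,b'),(a',b)].\<close>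
definition partial_transpose :: "nat \<Rightarrow> nat \<Rightarrow> complex mat \<Rightarrow> complex mat" where
  "partial_transpose dA dB M = mat (dA*dB) (dA*dB)
     (\<lambda>(i,j). M $$ ((i div dB) * dB + j mod dB, (j div dB) * dB + i mod dB))"

definition PPT :: "nat \<Rightarrow> nat \<Rightarrow> complex mat \<Rightarrow> bool" where
  "PPT dA dB M \<longleftrightarrow> psd (dA*dB) (partial_transpose dA dB M)"

definition ptrace_A :: "nat \<Rightarrow> nat \<Rightarrow> complex mat \<Rightarrow> complex mat" where
  "ptrace_A dA dB M = mat dB dB (\<lambda>(b,b'). \<Sum>a<dA. M $$ (a*dB + b, a*dB + b'))"

definition schmidt_rank :: "nat \<Rightarrow> nat \<Rightarrow> complex vec \<Rightarrow> nat" where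
  "schmidt_rank dA dB psi = vec_space.rank dB (ptrace_A dA dB (ketbra psi psi))"

definition mixture :: "nat \<Rightarrow> (real \<times> complex vec) list \<Rightarrow> complex mat" where
  "mixture n ps = foldr (\<lambda>(p,psi) acc. complex_of_real p \<cdot>\<^sub>m ketbra psi psi + acc) ps (0\<^sub>m n n)"

definition SN :: "nat \<Rightarrow> nat \<Rightarrow> complex mat \<Rightarrow> nat" where
  "SN dA dB rho = (LEAST k. \<exists>ps. rho = mixture (dA*dB) ps \<and>
      (\<forall>(p,psi) \<in> set ps. p > 0 \<and> psi \<in> carrier_vec (dA*dB) \<and> schmidt_rank dA dB psi \<le> k))"

definition Omega_vec :: "nat \<Rightarrow> complex vec" where
  "Omega_vec d = vec (d*d) (\<lambda>i. if i div d = i mod d then complex_of_real (1 / sqrt (real d)) else 0)"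

definition omega :: "nat \<Rightarrow> complex mat" where
  "omega d = ketbra (Omega_vec d) (Omega_vec d)"

text \<open>Four-party system A1 B1 A2 B2 with dims d1,d1,d2,d2, written in the bipartition
  A = A1A2 (index a = a1*d2 + a2), B = B1B2 (index b = b1*d2 + b2); global index a*(d1*d2) + b.
  idx1 gives the A1B1 index a1*d1 + b1, idx2 the A2B2 index a2*d2 + b2.\<close>
definition idx1 :: "nat \<Rightarrow> nat \<Rightarrow> nat \<Rightarrow> nat" where
  "idx1 d1 d2 i = ((i div (d1*d2)) div d2) * d1 + (i mod (d1*d2)) div d2"

definition idx2 :: "nat \<Rightarrow> nat \<Rightarrow> nat \<Rightarrow> nat" where
  "idx2 d1 d2 i = ((i div (d1*d2)) mod d2) * d2 + (i mod (d1*d2)) mod d2"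

text \<open>X_{A1B1} (x) Y_{A2B2}, as a matrix in the A1A2 : B1B2 ordering.\<close>
definition tensor12 :: "nat \<Rightarrow> nat \<Rightarrow> complex mat \<Rightarrow> complex mat \<Rightarrow> complex mat" where
  "tensor12 d1 d2 X Y = mat ((d1*d2)*(d1*d2)) ((d1*d2)*(d1*d2))
     (\<lambda>(i,j). X $$ (idx1 d1 d2 i, idx1 d1 d2 j) * Y $$ (idx2 d1 d2 i, idx2 d1 d2 j))"

definition Zop :: "nat \<Rightarrow> nat \<Rightarrow> complex mat" where
  "Zop d1 d2 = tensor12 d1 d2 (1\<^sub>m (d1*d1) - omega d1) (1\<^sub>m (d2*d2) - omega d2)
     + complex_of_real ((real d1 - 1) * (real d2 + 1)) \<cdot>\<^sub>m tensor12 d1 d2 (omega d1) (omega d2)"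

end

theory Submission
  imports Defs
begin

lemma (in vec_space) rank_cols_subset:
  assumes A: "A \<in> carrier_mat n m1" and B: "B \<in> carrier_mat n m2"
    and sub: "set (cols A) \<subseteq> set (cols B)"
  shows "rank A \<le> rank B"
proof -
  obtain S where S: "maximal S (\<lambda>T. T \<subseteq> set (cols A) \<and> lin_indpt T)"
    using maximal_exists[of "(\<lambda>T. T \<subseteq> set (cols A) \<and> lin_indpt T)" "card (set (cols A))" "{}"]
    by (meson List.finite_set card_mono empty_iff empty_subsetI finite_lin_indpt2 rev_finite_subset)
  hence "rank A = card S" using rank_card_indpt A by blast
  moreover have "S \<subseteq> set (cols B)" "lin_indpt S" using S sub unfolding maximal_def by auto
  ultimately show ?thesis using rank_ge_card_indpt[OF B] by auto
qed

lemma mult_unit_vec_col: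
  fixes X :: "'a::field mat"
  assumes X: "X \<in> carrier_mat nr nc" and i: "i < nc"
  shows "X *\<^sub>v unit_vec nc i = col X i"
proof (rule eq_vecI)
  show "dim_vec (X *\<^sub>v unit_vec nc i) = dim_vec (col X i)" using X by simp
  fix k assume "k < dim_vec (col X i)"
  hence k: "k < nr" using X by simp
  have "(X *\<^sub>v unit_vec nc i) $ k = (\<Sum>j = 0..<nc. X $$ (k, j) * (if j = i then 1 else 0))"
    using X k by (simp add: scalar_prod_def unit_vec_def)
  also have "\<dots> = (\<Sum>j = 0..<nc. if j = i then X $$ (k, i) else 0)"
    by (rule sum.cong) auto
  also have "\<dots> = X $$ (k, i)" using i by simp
  finally show "(X *\<^sub>v unit_vec nc i) $ k = col X i $ k" using X k i by simp
qed

lemma rank_kernel_mono: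
  fixes A B :: "'a::field mat"
  assumes A: "A \<in> carrier_mat n m" and B: "B \<in> carrier_mat n' m"
    and ker: "\<And>v. v \<in> carrier_vec m \<Longrightarrow> B *\<^sub>v v = 0\<^sub>v n' \<Longrightarrow> A *\<^sub>v v = 0\<^sub>v n"
  shows "vec_space.rank n A \<le> vec_space.rank n' B"
proof -
  interpret VA: vec_space "TYPE('a)" n .
  interpret VB: vec_space "TYPE('a)" n' .
  obtain S where S: "maximal S (\<lambda>T. T \<subseteq> set (cols A) \<and> VA.lin_indpt T)"
    using maximal_exists[of "(\<lambda>T. T \<subseteq> set (cols A) \<and> VA.lin_indpt T)" "card (set (cols A))" "{}"]
    by (meson List.finite_set card_mono empty_iff empty_subsetI VA.finite_lin_indpt2 rev_finite_subset)
  hence rA: "VA.rank A = card S" using VA.rank_card_indpt A by blast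
  have Ssub: "S \<subseteq> set (cols A)" and Sind: "VA.lin_indpt S" using S unfolding maximal_def by auto
  have finS: "finite S" using Ssub finite_subset by blast
  obtain ss where ss: "set ss = S" "distinct ss" using finite_distinct_list[OF finS] by blast
  define f where "f s = (SOME j. j < m \<and> col A j = s)" for s
  have f: "f s < m \<and> col A (f s) = s" if "s \<in> S" for s
  proof -
    from that Ssub obtain j where "j < m" "col A j = s"
      using A by (metis cols_length cols_nth in_set_conv_nth carrier_matD(2) subsetD)
    thus ?thesis unfolding f_def by (metis (mono_tags, lifting) someI_ex)
  qed
  define r where "r = length ss"
  define js where "js = map f ss"
  have js: "k < r \<Longrightarrow> js ! k < m \<and> col A (js ! k) = ss ! k" for k
    using f ss nth_mem unfolding js_def r_def by auto
  define P :: "'a mat" where "P = mat m r (\<lambda>(j,k). if j = js ! k then 1 else 0)"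
  have P: "P \<in> carrier_mat m r" unfolding P_def by auto
  have colP: "col (X * P) k = col X (js ! k)" if X: "X \<in> carrier_mat nn m" and k: "k < r" for X nn k
  proof (rule eq_vecI)
    show "dim_vec (col (X * P) k) = dim_vec (col X (js ! k))" using X P by simp
    fix i assume "i < dim_vec (col X (js ! k))"
    hence i: "i < nn" using X by simp
    have "col (X * P) k $ i = (\<Sum>j = 0..<m. X $$ (i, j) * (if j = js ! k then 1 else 0))"
      using X P i k unfolding P_def by (simp add: scalar_prod_def)
    also have "\<dots> = (\<Sum>j = 0..<m. if j = js ! k then X $$ (i, js ! k) else 0)"
      by (rule sum.cong) auto
    also have "\<dots> = X $$ (i, js ! k)" using js[OF k] by simp
    finally show "col (X * P) k $ i = col X (js ! k) $ i" using X i js[OF k] by simp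
  qed
  have AP: "A * P \<in> carrier_mat n r" using A P by simp
  have BP: "B * P \<in> carrier_mat n' r" using B P by simp
  have colsAP: "cols (A * P) = ss"
  proof (rule nth_equalityI)
    show "length (cols (A * P)) = length ss" using P r_def by simp
    fix k assume "k < length (cols (A * P))"
    hence k: "k < r" using P by simp
    show "cols (A * P) ! k = ss ! k" using colP[OF A k] js[OF k] k cols_nth[of k "A * P"] carrier_matD(2)[OF AP] by simp
  qed
  have colsBP: "set (cols (B * P)) \<subseteq> set (cols B)"
  proof
    fix x assume "x \<in> set (cols (B * P))"
    then obtain k where k: "k < r" "x = col (B * P) k" using BP
      by (metis cols_length cols_nth in_set_conv_nth carrier_matD(2))
    hence "x = col B (js ! k)" using colP[OF B] by simp
    thus "x \<in> set (cols B)" using js[OF k(1)] B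
      by (metis cols_length cols_nth nth_mem carrier_matD(2))
  qed
  have kerP: "(A * P) *\<^sub>v v = 0\<^sub>v n" if v: "v \<in> carrier_vec r" "(B * P) *\<^sub>v v = 0\<^sub>v n'" for v
  proof -
    have "B *\<^sub>v (P *\<^sub>v v) = 0\<^sub>v n'" using v B P by simp
    hence "A *\<^sub>v (P *\<^sub>v v) = 0\<^sub>v n" using ker P v by simp
    thus ?thesis using v A P by simp
  qed
  have distAP: "distinct (cols (A * P))" using colsAP ss by simp
  have indAP: "VA.lin_indpt (set (cols (A * P)))" using colsAP ss Sind by simp
  have distBP: "distinct (cols (B * P))"
  proof (rule ccontr)
    assume "\<not> distinct (cols (B * P))"
    then obtain i j where ij: "i \<noteq> j" "i < r" "j < r" "col (B * P) i = col (B * P) j"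
      using BP by (metis cols_length cols_nth distinct_conv_nth carrier_matD(2))
    define v :: "'a vec" where "v = unit_vec r i - unit_vec r j"
    have vc: "v \<in> carrier_vec r" unfolding v_def by simp
    have "(B * P) *\<^sub>v v = col (B * P) i - col (B * P) j" unfolding v_def
      using mult_minus_distrib_mat_vec[OF BP] mult_unit_vec_col[OF BP] ij by simp
    hence "(B * P) *\<^sub>v v = 0\<^sub>v n'" using ij BP by simp
    hence "(A * P) *\<^sub>v v = 0\<^sub>v n" using kerP vc by blast
    moreover have "(A * P) *\<^sub>v v = col (A * P) i - col (A * P) j" unfolding v_def
      using mult_minus_distrib_mat_vec[OF AP] mult_unit_vec_col[OF AP] ij by simp
    ultimately have e: "col (A * P) i - col (A * P) j = 0\<^sub>v n" by simp
    have "col (A * P) i = col (A * P) j"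
    proof (rule eq_vecI)
      show "dim_vec (col (A * P) i) = dim_vec (col (A * P) j)" by simp
      fix k assume "k < dim_vec (col (A * P) j)"
      hence k: "k < n" using A by simp
      have "(col (A * P) i - col (A * P) j) $ k = 0" using e k by simp
      thus "col (A * P) i $ k = col (A * P) j $ k" using k A P by auto
    qed
    thus False using distAP ij AP by (metis cols_length cols_nth distinct_conv_nth carrier_matD(2))
  qed
  have indBP: "VB.lin_indpt (set (cols (B * P)))"
  proof
    assume "VB.lin_dep (set (cols (B * P)))"
    then obtain v where v: "v \<in> carrier_vec r" "v \<noteq> 0\<^sub>v r" "(B * P) *\<^sub>v v = 0\<^sub>v n'"
      using VB.lin_depE[OF BP _ distBP] by blast
    hence "(A * P) *\<^sub>v v = 0\<^sub>v n" using kerP by blast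
    hence "VA.lin_dep (set (cols (A * P)))" using VA.lin_depI[OF AP v(1,2) _ distAP] by blast
    thus False using indAP by blast
  qed
  have "card (set (cols (B * P))) = r" using distBP P by (simp add: distinct_card)
  moreover have "r = card S" unfolding r_def using ss distinct_card by metis
  ultimately show ?thesis using VB.rank_ge_card_indpt[OF B colsBP indBP] rA by simp
qed

lemma rank_mat_sum:
  fixes f :: "nat \<Rightarrow> nat \<Rightarrow> nat \<Rightarrow> 'a::field"
  shows "vec_space.rank n (mat n m (\<lambda>(x,y). \<Sum>i<k. f i x y))
    \<le> (\<Sum>i<k. vec_space.rank n (mat n m (\<lambda>(x,y). f i x y)))"
proof (induction k)
  case 0
  have z: "mat n m (\<lambda>(x,y). \<Sum>i<0. f i x y) = 0\<^sub>m n m" by (rule eq_matI) auto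
  show ?case unfolding z by (simp add: vec_space.rank_0I)
next
  case (Suc k)
  have e: "mat n m (\<lambda>(x,y). \<Sum>i<Suc k. f i x y)
     = mat n m (\<lambda>(x,y). \<Sum>i<k. f i x y) + mat n m (\<lambda>(x,y). f k x y)"
    by (rule eq_matI) auto
  have "vec_space.rank n (mat n m (\<lambda>(x,y). \<Sum>i<k. f i x y) + mat n m (\<lambda>(x,y). f k x y))
    \<le> vec_space.rank n (mat n m (\<lambda>(x,y). \<Sum>i<k. f i x y)) + vec_space.rank n (mat n m (\<lambda>(x,y). f k x y))"
    by (rule vec_space.rank_subadditive) auto
  thus ?case unfolding e using Suc.IH by simp
qed

lemma rank_sum_rank1:
  fixes F G :: "nat \<Rightarrow> nat \<Rightarrow> 'a::field"
  shows "vec_space.rank n (mat n m (\<lambda>(x,y). \<Sum>t<k. F t x * G t y)) \<le> k"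
proof -
  have "vec_space.rank n (mat n m (\<lambda>(x,y). \<Sum>t<k. F t x * G t y))
     \<le> (\<Sum>t<k. vec_space.rank n (mat n m (\<lambda>(x,y). F t x * G t y)))"
    by (rule rank_mat_sum)
  also have "\<dots> \<le> (\<Sum>t<k. 1)"
  proof (rule sum_mono)
    fix t show "vec_space.rank n (mat n m (\<lambda>(x,y). F t x * G t y)) \<le> 1"
      by (rule vec_space.rank_le_1_product_entries[where f = "F t" and g = "G t"]) auto
  qed
  finally show ?thesis by simp
qed

lemma rank_scalar_id:
  fixes c :: "'a::field"
  assumes "c \<noteq> 0"
  shows "vec_space.rank n (mat n n (\<lambda>(x,y). if x = y then c else 0)) = n"
proof -
  have e: "mat n n (\<lambda>(x,y). if x = y then c else 0) = c \<cdot>\<^sub>m 1\<^sub>m n" by (rule eq_matI) auto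
  have "det (c \<cdot>\<^sub>m 1\<^sub>m n) = c ^ n" by (simp add: det_smult)
  hence "det (c \<cdot>\<^sub>m 1\<^sub>m n) \<noteq> 0" using assms by simp
  thus ?thesis unfolding e using vec_space.det_rank_iff[of "c \<cdot>\<^sub>m 1\<^sub>m n" n] by simp
qed

lemma divmod_aux:
  fixes a b d :: nat
  assumes "b < d"
  shows "(a * d + b) div d = a" "(a * d + b) mod d = b"
  using assms by auto

lemma lt_prod_aux:
  fixes a b c d :: nat
  assumes "a < c" "b < d"
  shows "a * d + b < c * d"
proof -
  have "a * d + b < a * d + d" using assms by simp
  also have "\<dots> = (a + 1) * d" by simp
  also have "\<dots> \<le> c * d" using assms by (intro mult_le_mono1) simp
  finally show ?thesis .
qed

lemma div_lt_aux:
  fixes g c d :: nat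
  assumes "g < c * d"
  shows "g div d < c" "g mod d < d"
  using assms by (auto simp: less_mult_imp_div_less) (metis mod_less_divisor mult_0_right neq0_conv not_less0)

definition enc :: "nat \<Rightarrow> nat \<Rightarrow> nat \<Rightarrow> nat \<Rightarrow> nat" where
  "enc d1 d2 x y = ((x div d1) * d2 + y div d2) * (d1 * d2) + (x mod d1) * d2 + y mod d2"

lemma idx_enc:
  assumes x: "x < d1 * d1" and y: "y < d2 * d2"
  shows "idx1 d1 d2 (enc d1 d2 x y) = x" "idx2 d1 d2 (enc d1 d2 x y) = y"
    "enc d1 d2 x y < (d1 * d2) * (d1 * d2)"
proof -
  have a1: "x div d1 < d1" "x mod d1 < d1" using div_lt_aux[OF x] by auto
  have a2: "y div d2 < d2" "y mod d2 < d2" using div_lt_aux[OF y] by auto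
  have B: "(x mod d1) * d2 + y mod d2 < d1 * d2" using lt_prod_aux a1 a2 by blast
  have A: "(x div d1) * d2 + y div d2 < d1 * d2" using lt_prod_aux a1 a2 by blast
  have e: "enc d1 d2 x y = ((x div d1) * d2 + y div d2) * (d1 * d2) + ((x mod d1) * d2 + y mod d2)"
    unfolding enc_def by simp
  show "idx1 d1 d2 (enc d1 d2 x y) = x" unfolding idx1_def e divmod_aux[OF B] divmod_aux[OF a2(2)] divmod_aux[OF a2(1)]
    by simp
  show "idx2 d1 d2 (enc d1 d2 x y) = y" unfolding idx2_def e divmod_aux[OF B] divmod_aux[OF a2(2)] divmod_aux[OF a2(1)]
    by simp
  show "enc d1 d2 x y < (d1 * d2) * (d1 * d2)" unfolding e using lt_prod_aux[OF A B] .
qed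

lemma enc_idx:
  assumes g: "g < (d1 * d2) * (d1 * d2)"
  shows "enc d1 d2 (idx1 d1 d2 g) (idx2 d1 d2 g) = g"
    "idx1 d1 d2 g < d1 * d1" "idx2 d1 d2 g < d2 * d2"
proof -
  define D where "D = d1 * d2"
  have q: "g div D < D" "g mod D < D" using div_lt_aux g unfolding D_def by auto
  have a: "g div D div d2 < d1" "g div D mod d2 < d2" "g mod D div d2 < d1" "g mod D mod d2 < d2"
    using div_lt_aux q unfolding D_def by auto
  show "idx1 d1 d2 g < d1 * d1" unfolding idx1_def D_def[symmetric] using lt_prod_aux a by blast
  show "idx2 d1 d2 g < d2 * d2" unfolding idx2_def D_def[symmetric] using lt_prod_aux a by blast
  have "enc d1 d2 (idx1 d1 d2 g) (idx2 d1 d2 g)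
     = (g div D div d2 * d2 + g div D mod d2) * D + (g mod D div d2 * d2 + g mod D mod d2)"
    unfolding enc_def idx1_def idx2_def D_def[symmetric] divmod_aux[OF a(3)] divmod_aux[OF a(4)]
    by (simp add: D_def algebra_simps)
  also have "\<dots> = g" by simp
  finally show "enc d1 d2 (idx1 d1 d2 g) (idx2 d1 d2 g) = g" .
qed

lemma sum_reindex_enc:
  fixes h :: "nat \<Rightarrow> 'a::comm_monoid_add"
  shows "(\<Sum>g<(d1 * d2) * (d1 * d2). h g) = (\<Sum>x<d1 * d1. \<Sum>y<d2 * d2. h (enc d1 d2 x y))"
proof -
  have bij: "bij_betw (\<lambda>(x,y). enc d1 d2 x y) ({..<d1 * d1} \<times> {..<d2 * d2}) {..<(d1 * d2) * (d1 * d2)}"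
  proof (rule bij_betw_byWitness[where f' = "\<lambda>g. (idx1 d1 d2 g, idx2 d1 d2 g)"])
    show "\<forall>a\<in>{..<d1 * d1} \<times> {..<d2 * d2}. (idx1 d1 d2 (case a of (x, y) \<Rightarrow> enc d1 d2 x y),
          idx2 d1 d2 (case a of (x, y) \<Rightarrow> enc d1 d2 x y)) = a"
      using idx_enc by auto
    show "\<forall>a'\<in>{..<d1 * d2 * (d1 * d2)}. (case (idx1 d1 d2 a', idx2 d1 d2 a') of (x, y) \<Rightarrow> enc d1 d2 x y) = a'"
      using enc_idx by auto
    show "(\<lambda>(x, y). enc d1 d2 x y) ` ({..<d1 * d1} \<times> {..<d2 * d2}) \<subseteq> {..<d1 * d2 * (d1 * d2)}"
      using idx_enc by auto
    show "(\<lambda>g. (idx1 d1 d2 g, idx2 d1 d2 g)) ` {..<d1 * d2 * (d1 * d2)} \<subseteq> {..<d1 * d1} \<times> {..<d2 * d2}"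
      using enc_idx by auto
  qed
  have "(\<Sum>g<(d1 * d2) * (d1 * d2). h g) = (\<Sum>(x,y)\<in>{..<d1 * d1} \<times> {..<d2 * d2}. h (enc d1 d2 x y))"
    using sum.reindex_bij_betw[OF bij, of h] by (simp add: case_prod_unfold)
  also have "\<dots> = (\<Sum>x<d1 * d1. \<Sum>y<d2 * d2. h (enc d1 d2 x y))"
    by (rule sum.cartesian_product[symmetric])
  finally show ?thesis .
qed

lemma sum_pair:
  fixes h :: "nat \<Rightarrow> 'a::comm_monoid_add"
  shows "(\<Sum>x<d * d. h x) = (\<Sum>a<d. \<Sum>b<d. h (a * d + b))"
proof -
  have bij: "bij_betw (\<lambda>(a,b). a * d + b) ({..<d} \<times> {..<d}) {..<d * d}"
  proof (rule bij_betw_byWitness[where f' = "\<lambda>x. (x div d, x mod d)"])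
    show "\<forall>a\<in>{..<d} \<times> {..<d}. ((case a of (a, b) \<Rightarrow> a * d + b) div d, (case a of (a, b) \<Rightarrow> a * d + b) mod d) = a"
      by auto
    show "\<forall>a'\<in>{..<d * d}. (case (a' div d, a' mod d) of (a, b) \<Rightarrow> a * d + b) = a'" by auto
    show "(\<lambda>(a, b). a * d + b) ` ({..<d} \<times> {..<d}) \<subseteq> {..<d * d}" using lt_prod_aux by auto
    show "(\<lambda>x. (x div d, x mod d)) ` {..<d * d} \<subseteq> {..<d} \<times> {..<d}" using div_lt_aux by auto
  qed
  have "(\<Sum>x<d * d. h x) = (\<Sum>(a,b)\<in>{..<d} \<times> {..<d}. h (a * d + b))"
    using sum.reindex_bij_betw[OF bij, of h] by (simp add: case_prod_unfold)
  also have "\<dots> = (\<Sum>a<d. \<Sum>b<d. h (a * d + b))" by (rule sum.cartesian_product[symmetric])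
  finally show ?thesis .
qed

lemma ip_expand:
  fixes u w :: "complex vec"
  assumes "u \<in> carrier_vec n" "w \<in> carrier_vec n"
  shows "conjugate u \<bullet> w = (\<Sum>j<n. cnj (u $ j) * w $ j)"
  using assms by (simp add: scalar_prod_def atLeast0LessThan)

lemma qf_expand:
  fixes A :: "complex mat"
  assumes "A \<in> carrier_mat n n" "w \<in> carrier_vec n"
  shows "conjugate w \<bullet> (A *\<^sub>v w) = (\<Sum>i<n. \<Sum>j<n. cnj (w $ i) * A $$ (i,j) * w $ j)"
  using assms by (simp add: scalar_prod_def atLeast0LessThan sum_distrib_left mult.assoc)

lemma ketbra_entry:
  "i < dim_vec v \<Longrightarrow> j < dim_vec w \<Longrightarrow> ketbra v w $$ (i,j) = v $ i * cnj (w $ j)"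
  by (simp add: ketbra_def)

lemma mixture_Nil: "mixture n [] = 0\<^sub>m n n" by (simp add: mixture_def)

lemma mixture_Cons: "mixture n ((p,\<psi>) # ps) = complex_of_real p \<cdot>\<^sub>m ketbra \<psi> \<psi> + mixture n ps"
  by (simp add: mixture_def)

lemma mixture_carrier: "mixture n ps \<in> carrier_mat n n"
proof (induction ps)
  case Nil thus ?case by (simp add: mixture_Nil)
next
  case (Cons x ps)
  obtain p \<psi> where x: "x = (p,\<psi>)" by (cases x)
  have "dim_row (mixture n (x # ps)) = dim_row (mixture n ps)" "dim_col (mixture n (x # ps)) = dim_col (mixture n ps)"
    unfolding x mixture_Cons plus_mat_def by simp_all
  thus ?case using Cons.IH unfolding carrier_mat_def by simp
qed


lemma mixture_Cons_entry:
  assumes "\<psi> \<in> carrier_vec n" "i < n" "j < n"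
  shows "mixture n ((p,\<psi>) # ps) $$ (i,j) = complex_of_real p * \<psi> $ i * cnj (\<psi> $ j) + mixture n ps $$ (i,j)"
proof -
  have m: "mixture n ps \<in> carrier_mat n n" by (rule mixture_carrier)
  show ?thesis unfolding mixture_Cons using assms m by (simp add: ketbra_def)
qed

lemma mixture_entry:
  assumes "\<forall>(p,\<psi>)\<in>set ps. \<psi> \<in> carrier_vec n" "i < n" "j < n"
  shows "mixture n ps $$ (i,j) = (\<Sum>(p,\<psi>)\<leftarrow>ps. complex_of_real p * \<psi> $ i * cnj (\<psi> $ j))"
  using assms(1)
proof (induction ps)
  case Nil thus ?case using assms by (simp add: mixture_Nil)
next
  case (Cons x ps)
  obtain p \<psi> where x: "x = (p,\<psi>)" by (cases x)
  have c: "\<psi> \<in> carrier_vec n" using Cons.prems x by auto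
  have m: "mixture n ps \<in> carrier_mat n n" by (rule mixture_carrier)
  show ?case using mixture_Cons_entry[OF c assms(2,3), of p ps] Cons x by simp
qed

lemma mixture_qf:
  assumes "\<forall>(p,\<psi>)\<in>set ps. \<psi> \<in> carrier_vec n" "w \<in> carrier_vec n"
  shows "conjugate w \<bullet> (mixture n ps *\<^sub>v w)
     = complex_of_real (\<Sum>(p,\<psi>)\<leftarrow>ps. p * (cmod (conjugate \<psi> \<bullet> w))\<^sup>2)"
  using assms(1)
proof (induction ps)
  case Nil thus ?case using assms qf_expand[of "0\<^sub>m n n" n w] by (simp add: mixture_Nil)
next
  case (Cons x ps)
  obtain p \<psi> where x: "x = (p,\<psi>)" by (cases x)
  have c: "\<psi> \<in> carrier_vec n" using Cons.prems x by auto
  have m: "mixture n ps \<in> carrier_mat n n" by (rule mixture_carrier)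
  have mc: "mixture n (x # ps) \<in> carrier_mat n n" by (rule mixture_carrier)
  define z where "z = conjugate \<psi> \<bullet> w"
  have z: "z = (\<Sum>j<n. cnj (\<psi> $ j) * w $ j)" unfolding z_def using ip_expand[OF c assms(2)] .
  have cz: "cnj z = (\<Sum>i<n. cnj (w $ i) * \<psi> $ i)" unfolding z by (simp add: mult.commute)
  have "conjugate w \<bullet> (mixture n (x # ps) *\<^sub>v w)
     = (\<Sum>i<n. \<Sum>j<n. cnj (w $ i) * (complex_of_real p * \<psi> $ i * cnj (\<psi> $ j) + mixture n ps $$ (i,j)) * w $ j)"
    unfolding x qf_expand[OF mc[unfolded x] assms(2)]
    by (intro sum.cong refl, subst mixture_Cons_entry[OF c], auto)
  also have "\<dots> = complex_of_real p * (cnj z * z) + conjugate w \<bullet> (mixture n ps *\<^sub>v w)"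
  proof -
    have "(\<Sum>i<n. \<Sum>j<n. cnj (w $ i) * (complex_of_real p * \<psi> $ i * cnj (\<psi> $ j) + mixture n ps $$ (i,j)) * w $ j)
      = (\<Sum>i<n. \<Sum>j<n. complex_of_real p * ((cnj (w $ i) * \<psi> $ i) * (cnj (\<psi> $ j) * w $ j))
          + cnj (w $ i) * mixture n ps $$ (i,j) * w $ j)"
      by (intro sum.cong refl) (simp add: algebra_simps)
    also have "\<dots> = complex_of_real p * (\<Sum>i<n. \<Sum>j<n. (cnj (w $ i) * \<psi> $ i) * (cnj (\<psi> $ j) * w $ j))
          + (\<Sum>i<n. \<Sum>j<n. cnj (w $ i) * mixture n ps $$ (i,j) * w $ j)"
      by (simp add: sum.distrib sum_distrib_left)
    also have "(\<Sum>i<n. \<Sum>j<n. (cnj (w $ i) * \<psi> $ i) * (cnj (\<psi> $ j) * w $ j))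
       = (\<Sum>i<n. cnj (w $ i) * \<psi> $ i) * (\<Sum>j<n. cnj (\<psi> $ j) * w $ j)"
      by (rule sum_product[symmetric])
    finally show ?thesis unfolding qf_expand[OF m assms(2)] by (simp only: cz[symmetric] z[symmetric])
  qed
  also have "cnj z * z = complex_of_real ((cmod z)\<^sup>2)" by (metis complex_norm_square mult.commute)
  finally show ?case using Cons c unfolding x z_def by simp
qed

lemma mixture_psd:
  assumes "\<forall>(p,\<psi>)\<in>set ps. p \<ge> 0 \<and> \<psi> \<in> carrier_vec n"
  shows "psd n (mixture n ps)"
  unfolding psd_def
proof (rule conjI[OF mixture_carrier], rule ballI)
  fix v :: "complex vec" assume v: "v \<in> carrier_vec n"
  have q: "conjugate v \<bullet> (mixture n ps *\<^sub>v v)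
     = complex_of_real (\<Sum>(p,\<psi>)\<leftarrow>ps. p * (cmod (conjugate \<psi> \<bullet> v))\<^sup>2)"
    by (rule mixture_qf, insert assms v, auto)
  have "(\<Sum>(p,\<psi>)\<leftarrow>ps. p * (cmod (conjugate \<psi> \<bullet> v))\<^sup>2) \<ge> 0"
    by (rule sum_list_nonneg, insert assms, auto)
  thus "Im (conjugate v \<bullet> (mixture n ps *\<^sub>v v)) = 0 \<and> Re (conjugate v \<bullet> (mixture n ps *\<^sub>v v)) \<ge> 0"
    unfolding q by simp
qed

definition dl :: "nat \<Rightarrow> nat \<Rightarrow> real" where "dl x y = (if x = y then 1 else 0)"
definition dgi :: "nat \<Rightarrow> nat \<Rightarrow> real" where "dgi d x = (if x div d = x mod d then 1 else 0)"
definition sw :: "nat \<Rightarrow> nat \<Rightarrow> nat" where "sw d x = (x mod d) * d + x div d"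
definition Fi :: "nat \<Rightarrow> nat \<Rightarrow> nat \<Rightarrow> real" where "Fi d x y = dl y (sw d x)"
definition nu :: "nat \<Rightarrow> nat \<Rightarrow> complex vec" where
  "nu d z = vec (d*d) (\<lambda>x. complex_of_real (dl x z - dgi d z * dgi d x / real d))"
definition sv :: "nat \<Rightarrow> real \<Rightarrow> nat \<Rightarrow> complex vec" where
  "sv d s z = vec (d*d) (\<lambda>x. complex_of_real (dl x z + s * dl x (sw d z)))"
definition flist :: "nat \<Rightarrow> (nat \<Rightarrow> real) \<Rightarrow> (nat \<Rightarrow> complex vec) \<Rightarrow> (real \<times> complex vec) list" where
  "flist K P V = map (\<lambda>z. (P z, V z)) [0..<K]"

lemma sum_dl: "x < n \<Longrightarrow> (\<Sum>z<n. dl x z * f z) = f x"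
  by (simp add: dl_def if_distrib[of "\<lambda>t. t * _"] cong: if_cong)

lemma sum_dl': "x < n \<Longrightarrow> (\<Sum>z<n. f z * dl x z) = f x"
  using sum_dl[of x n f] by (simp add: mult.commute)

lemma dl_sym: "dl x y = dl y x" by (simp add: dl_def)

lemma sum_dgi: "(\<Sum>z<d*d. dgi d z) = real d"
proof -
  have "(\<Sum>z<d*d. dgi d z) = (\<Sum>a<d. \<Sum>b<d. dgi d (a * d + b))" by (rule sum_pair)
  also have "\<dots> = (\<Sum>a<d. \<Sum>b<d. dl a b)"
    by (intro sum.cong refl) (simp add: dgi_def dl_def)
  also have "\<dots> = (\<Sum>a<d. 1)" by (intro sum.cong refl) (simp add: sum_dl[where f = "\<lambda>_. 1", simplified])
  finally show ?thesis by simp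
qed

lemma dgi_sq: "dgi d z * dgi d z = dgi d z" by (simp add: dgi_def)

lemma sw_lt: "x < d * d \<Longrightarrow> sw d x < d * d"
  unfolding sw_def using lt_prod_aux div_lt_aux by blast

lemma sw_sw: "x < d * d \<Longrightarrow> sw d (sw d x) = x"
proof -
  assume x: "x < d * d"
  have a: "x div d < d" "x mod d < d" using div_lt_aux[OF x] by auto
  show ?thesis unfolding sw_def divmod_aux[OF a(1)] by simp
qed

lemma dl_sw: "x < d * d \<Longrightarrow> z < d * d \<Longrightarrow> dl x (sw d z) = dl (sw d x) z"
  unfolding dl_def using sw_sw by metis

lemma mixture_flist_entry:
  assumes "\<And>z. z < K \<Longrightarrow> V z \<in> carrier_vec n" "i < n" "j < n"
  shows "mixture n (flist K P V) $$ (i,j) = (\<Sum>z<K. complex_of_real (P z) * V z $ i * cnj (V z $ j))"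
proof -
  have "mixture n (flist K P V) $$ (i,j) = (\<Sum>(p,\<psi>)\<leftarrow>flist K P V. complex_of_real p * \<psi> $ i * cnj (\<psi> $ j))"
    by (rule mixture_entry, insert assms, auto simp: flist_def)
  also have "\<dots> = sum_list (map (\<lambda>z. complex_of_real (P z) * V z $ i * cnj (V z $ j)) [0..<K])"
    by (simp add: flist_def comp_def)
  also have "\<dots> = (\<Sum>z<K. complex_of_real (P z) * V z $ i * cnj (V z $ j))"
    by (simp add: sum_set_upt_conv_sum_list_nat[symmetric] atLeast0LessThan)
  finally show ?thesis .
qed

lemma nu_carrier: "nu d z \<in> carrier_vec (d*d)" by (simp add: nu_def)
lemma sv_carrier: "sv d s z \<in> carrier_vec (d*d)" by (simp add: sv_def)

lemma nu_entry:
  assumes "x < d*d" "x' < d*d"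
  shows "mixture (d*d) (flist (d*d) (\<lambda>_. 1) (nu d)) $$ (x,x')
    = complex_of_real (dl x x' - dgi d x * dgi d x' / real d)"
proof -
  have d: "d > 0" using assms by (cases d) auto
  define u where "u = dgi d x / real d"
  define v where "v = dgi d x' / real d"
  have "mixture (d*d) (flist (d*d) (\<lambda>_. 1) (nu d)) $$ (x,x')
    = (\<Sum>z<d*d. complex_of_real ((dl x z - dgi d z * u) * (dl x' z - dgi d z * v)))"
    by (subst mixture_flist_entry[OF nu_carrier assms], intro sum.cong refl, simp add: nu_def assms u_def v_def)
  also have "\<dots> = complex_of_real (\<Sum>z<d*d. (dl x z * dl x' z - dl x z * dgi d z * v
        - dl x' z * dgi d z * u + dgi d z * (u * v)))"
    unfolding of_real_sum
  proof (intro sum.cong refl arg_cong[where f = complex_of_real])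
    fix z
    have "(dl x z - dgi d z * u) * (dl x' z - dgi d z * v) = dl x z * dl x' z - dl x z * dgi d z * v
        - dl x' z * dgi d z * u + (dgi d z * dgi d z) * (u * v)" by (simp add: algebra_simps)
    thus "(dl x z - dgi d z * u) * (dl x' z - dgi d z * v) = dl x z * dl x' z - dl x z * dgi d z * v
        - dl x' z * dgi d z * u + dgi d z * (u * v)" by (simp only: dgi_sq)
  qed
  also have "(\<Sum>z<d*d. (dl x z * dl x' z - dl x z * dgi d z * v
        - dl x' z * dgi d z * u + dgi d z * (u * v)))
     = dl x x' - dgi d x * v - dgi d x' * u + real d * (u * v)"
  proof -
    have 1: "(\<Sum>z<d*d. dl x z * dl x' z) = dl x x'" using sum_dl[OF assms(1)] dl_sym by metis
    have 2: "(\<Sum>z<d*d. dl x z * dgi d z * v) = dgi d x * v"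
      using sum_dl[OF assms(1), of "\<lambda>z. dgi d z * v"] by (simp add: mult.assoc)
    have 3: "(\<Sum>z<d*d. dl x' z * dgi d z * u) = dgi d x' * u"
      using sum_dl[OF assms(2), of "\<lambda>z. dgi d z * u"] by (simp add: mult.assoc)
    have 4: "(\<Sum>z<d*d. dgi d z * (u * v)) = real d * (u * v)"
      using sum_dgi[of d] by (simp add: sum_distrib_right[symmetric])
    show ?thesis using 1 2 3 4 by (simp add: sum.distrib sum_subtractf)
  qed
  also have "dl x x' - dgi d x * v - dgi d x' * u + real d * (u * v) = dl x x' - dgi d x * dgi d x' / real d"
    unfolding u_def v_def using d by (simp add: field_simps dgi_sq)
  finally show ?thesis .
qed

lemma sv_entry:
  assumes "x < d*d" "x' < d*d" "s * s = 1"
  shows "mixture (d*d) (flist (d*d) (\<lambda>_. 1/4) (sv d s)) $$ (x,x')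
    = complex_of_real ((dl x x' + s * Fi d x x') / 2)"
proof -
  have "mixture (d*d) (flist (d*d) (\<lambda>_. 1/4) (sv d s)) $$ (x,x')
    = (\<Sum>z<d*d. complex_of_real (1/4 * ((dl x z + s * dl (sw d x) z) * (dl x' z + s * dl (sw d x') z))))"
    by (subst mixture_flist_entry[OF sv_carrier assms(1,2)], intro sum.cong refl,
        simp add: sv_def assms dl_sw)
  also have "\<dots> = complex_of_real (1/4 * (\<Sum>z<d*d. dl x z * dl x' z + s * (dl x z * dl (sw d x') z)
     + s * (dl (sw d x) z * dl x' z) + (s * s) * (dl (sw d x) z * dl (sw d x') z)))"
    unfolding of_real_sum sum_distrib_left
    by (intro sum.cong refl arg_cong[where f = complex_of_real]) (simp add: algebra_simps)
  also have "(\<Sum>z<d*d. dl x z * dl x' z + s * (dl x z * dl (sw d x') z)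
     + s * (dl (sw d x) z * dl x' z) + (s * s) * (dl (sw d x) z * dl (sw d x') z))
     = dl x x' + s * dl x (sw d x') + s * dl (sw d x) x' + (s * s) * dl (sw d x) (sw d x')"
    using sw_lt[OF assms(1)] sw_lt[OF assms(2)] assms(1,2)
    by (simp add: sum.distrib sum_distrib_left[symmetric] sum_dl dl_sym[of x' x] dl_sym[of "sw d x'" x]
        dl_sym[of x' "sw d x"] dl_sym[of "sw d x'" "sw d x"])
  also have "dl x (sw d x') = Fi d x x'" unfolding Fi_def using dl_sw[OF assms(1,2)] dl_sym by metis
  also have "dl (sw d x) x' = Fi d x x'" unfolding Fi_def using dl_sym by metis
  also have "dl (sw d x) (sw d x') = dl x x'"
    using dl_sw[OF sw_lt[OF assms(1)] assms(2)] sw_sw[OF assms(1)] by simp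
  also have "1/4 * (dl x x' + s * Fi d x x' + s * Fi d x x' + s * s * dl x x') = (dl x x' + s * Fi d x x') / 2"
    unfolding assms(3) by (simp add: field_simps)
  finally show ?thesis .
qed

lemma Omega_entry: "x < d*d \<Longrightarrow> Omega_vec d $ x = complex_of_real (dgi d x / sqrt (real d))"
  by (simp add: Omega_vec_def dgi_def)

lemma Omega_carrier: "Omega_vec d \<in> carrier_vec (d*d)" by (simp add: Omega_vec_def)

lemma omega_entry:
  assumes "x < d*d" "x' < d*d"
  shows "omega d $$ (x,x') = complex_of_real (dgi d x * dgi d x' / real d)"
proof -
  have d: "real d \<ge> 0" by simp
  have "omega d $$ (x,x') = complex_of_real (dgi d x / sqrt (real d)) * cnj (complex_of_real (dgi d x' / sqrt (real d)))"
    unfolding omega_def using assms Omega_carrier[of d] by (simp add: ketbra_entry Omega_entry)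
  also have "\<dots> = complex_of_real (dgi d x / sqrt (real d) * (dgi d x' / sqrt (real d)))"
    by (simp only: complex_cnj_complex_of_real of_real_mult)
  also have "dgi d x / sqrt (real d) * (dgi d x' / sqrt (real d)) = dgi d x * dgi d x' / (sqrt (real d) * sqrt (real d))"
    by (rule times_divide_times_eq)
  also have "sqrt (real d) * sqrt (real d) = real d" using d by simp
  finally show ?thesis .
qed

lemma one_minus_omega_entry:
  assumes "x < d*d" "x' < d*d"
  shows "(1\<^sub>m (d*d) - omega d) $$ (x,x') = complex_of_real (dl x x' - dgi d x * dgi d x' / real d)"
proof -
  have oc: "omega d \<in> carrier_mat (d*d) (d*d)" unfolding omega_def ketbra_def using Omega_carrier[of d] by simp
  show ?thesis using assms oc by (simp add: omega_entry dl_def)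
qed

definition ptp :: "nat \<Rightarrow> nat \<Rightarrow> nat \<Rightarrow> nat" where "ptp d x y = (x div d) * d + y mod d"

lemma ptp_facts:
  assumes x: "x < d*d" and y: "y < d*d"
  shows "ptp d x y < d*d" "dl (ptp d x y) (ptp d y x) = dl x y"
    "dgi d (ptp d x y) * dgi d (ptp d y x) = Fi d x y"
proof -
  have a: "x div d < d" "x mod d < d" "y div d < d" "y mod d < d" using div_lt_aux x y by auto
  show "ptp d x y < d*d" unfolding ptp_def using lt_prod_aux a by blast
  have e1: "(ptp d x y = ptp d y x) = (x = y)"
  proof
    assume "ptp d x y = ptp d y x"
    hence "x div d = y div d" "y mod d = x mod d" unfolding ptp_def
      using divmod_aux[OF a(4), of "x div d"] divmod_aux[OF a(2), of "y div d"] by metis+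
    thus "x = y" by (metis div_mult_mod_eq)
  qed simp
  show "dl (ptp d x y) (ptp d y x) = dl x y" unfolding dl_def e1 ..
  have "dgi d (ptp d x y) = (if x div d = y mod d then 1 else 0)"
    unfolding dgi_def ptp_def divmod_aux[OF a(4)] ..
  moreover have "dgi d (ptp d y x) = (if y div d = x mod d then 1 else 0)"
    unfolding dgi_def ptp_def divmod_aux[OF a(2)] ..
  moreover have "(y = sw d x) = (y div d = x mod d \<and> y mod d = x div d)"
    unfolding sw_def using divmod_aux[OF a(1), of "x mod d"] by (metis div_mult_mod_eq)
  ultimately show "dgi d (ptp d x y) * dgi d (ptp d y x) = Fi d x y"
    unfolding Fi_def dl_def by auto
qed

lemma sum_rect:
  fixes h :: "nat \<Rightarrow> 'a::comm_monoid_add"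
  shows "(\<Sum>z<m * k. h z) = (\<Sum>a<m. \<Sum>b<k. h (a * k + b))"
proof -
  have bij: "bij_betw (\<lambda>(a,b). a * k + b) ({..<m} \<times> {..<k}) {..<m * k}"
  proof (rule bij_betw_byWitness[where f' = "\<lambda>x. (x div k, x mod k)"])
    show "\<forall>a\<in>{..<m} \<times> {..<k}. ((case a of (a, b) \<Rightarrow> a * k + b) div k, (case a of (a, b) \<Rightarrow> a * k + b) mod k) = a"
      by auto
    show "\<forall>a'\<in>{..<m * k}. (case (a' div k, a' mod k) of (a, b) \<Rightarrow> a * k + b) = a'" by auto
    show "(\<lambda>(a, b). a * k + b) ` ({..<m} \<times> {..<k}) \<subseteq> {..<m * k}" using lt_prod_aux by auto
    show "(\<lambda>x. (x div k, x mod k)) ` {..<m * k} \<subseteq> {..<m} \<times> {..<k}" using div_lt_aux by auto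
  qed
  have "(\<Sum>z<m * k. h z) = (\<Sum>(a,b)\<in>{..<m} \<times> {..<k}. h (a * k + b))"
    using sum.reindex_bij_betw[OF bij, of h] by (simp add: case_prod_unfold)
  also have "\<dots> = (\<Sum>a<m. \<Sum>b<k. h (a * k + b))" by (rule sum.cartesian_product[symmetric])
  finally show ?thesis .
qed

definition vt :: "nat \<Rightarrow> nat \<Rightarrow> complex vec \<Rightarrow> complex vec \<Rightarrow> complex vec" where
  "vt d1 d2 u v = vec ((d1*d2)*(d1*d2)) (\<lambda>g. u $ idx1 d1 d2 g * v $ idx2 d1 d2 g)"

lemma vt_carrier: "vt d1 d2 u v \<in> carrier_vec ((d1*d2)*(d1*d2))" by (simp add: vt_def)

lemma vt_entry: "g < (d1*d2)*(d1*d2) \<Longrightarrow> vt d1 d2 u v $ g = u $ idx1 d1 d2 g * v $ idx2 d1 d2 g"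
  by (simp add: vt_def)

lemma ip_vt:
  assumes u: "u \<in> carrier_vec (d1*d1)" "u' \<in> carrier_vec (d1*d1)"
    and v: "v \<in> carrier_vec (d2*d2)" "v' \<in> carrier_vec (d2*d2)"
  shows "conjugate (vt d1 d2 u v) \<bullet> vt d1 d2 u' v' = (conjugate u \<bullet> u') * (conjugate v \<bullet> v')"
proof -
  have "conjugate (vt d1 d2 u v) \<bullet> vt d1 d2 u' v'
     = (\<Sum>g<(d1*d2)*(d1*d2). cnj (vt d1 d2 u v $ g) * vt d1 d2 u' v' $ g)"
    by (rule ip_expand) (rule vt_carrier)+
  also have "\<dots> = (\<Sum>x<d1*d1. \<Sum>y<d2*d2. cnj (u $ x * v $ y) * (u' $ x * v' $ y))"
    unfolding sum_reindex_enc by (intro sum.cong refl) (simp add: vt_entry idx_enc)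
  also have "\<dots> = (\<Sum>x<d1*d1. \<Sum>y<d2*d2. (cnj (u $ x) * u' $ x) * (cnj (v $ y) * v' $ y))"
    by (intro sum.cong refl) (simp add: algebra_simps)
  also have "\<dots> = (\<Sum>x<d1*d1. cnj (u $ x) * u' $ x) * (\<Sum>y<d2*d2. cnj (v $ y) * v' $ y)"
    by (rule sum_product[symmetric])
  finally show ?thesis using ip_expand[OF u(1,2)] ip_expand[OF v(1,2)] by simp
qed

definition prodL :: "nat \<Rightarrow> nat \<Rightarrow> real \<Rightarrow> nat \<Rightarrow> (nat \<Rightarrow> real) \<Rightarrow> (nat \<Rightarrow> complex vec)
   \<Rightarrow> nat \<Rightarrow> (nat \<Rightarrow> real) \<Rightarrow> (nat \<Rightarrow> complex vec) \<Rightarrow> (real \<times> complex vec) list" where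
  "prodL d1 d2 c K1 P1 V1 K2 P2 V2 = flist (K1 * K2) (\<lambda>z. c * P1 (z div K2) * P2 (z mod K2))
      (\<lambda>z. vt d1 d2 (V1 (z div K2)) (V2 (z mod K2)))"

lemma prodL_entry:
  assumes V1: "\<And>z. z < K1 \<Longrightarrow> V1 z \<in> carrier_vec (d1*d1)"
    and V2: "\<And>z. z < K2 \<Longrightarrow> V2 z \<in> carrier_vec (d2*d2)"
    and g: "g < (d1*d2)*(d1*d2)" "g' < (d1*d2)*(d1*d2)"
  shows "mixture ((d1*d2)*(d1*d2)) (prodL d1 d2 c K1 P1 V1 K2 P2 V2) $$ (g,g')
    = complex_of_real c * mixture (d1*d1) (flist K1 P1 V1) $$ (idx1 d1 d2 g, idx1 d1 d2 g')
       * mixture (d2*d2) (flist K2 P2 V2) $$ (idx2 d1 d2 g, idx2 d1 d2 g')"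
proof -
  have i: "idx1 d1 d2 g < d1*d1" "idx1 d1 d2 g' < d1*d1" "idx2 d1 d2 g < d2*d2" "idx2 d1 d2 g' < d2*d2"
    using enc_idx g by auto
  let ?x = "idx1 d1 d2 g" let ?x' = "idx1 d1 d2 g'" let ?y = "idx2 d1 d2 g" let ?y' = "idx2 d1 d2 g'"
  have "mixture ((d1*d2)*(d1*d2)) (prodL d1 d2 c K1 P1 V1 K2 P2 V2) $$ (g,g')
     = (\<Sum>z<K1*K2. complex_of_real (c * P1 (z div K2) * P2 (z mod K2))
          * vt d1 d2 (V1 (z div K2)) (V2 (z mod K2)) $ g * cnj (vt d1 d2 (V1 (z div K2)) (V2 (z mod K2)) $ g'))"
    unfolding prodL_def by (rule mixture_flist_entry[OF vt_carrier g])
  also have "\<dots> = (\<Sum>a<K1. \<Sum>b<K2. complex_of_real c *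
       ((complex_of_real (P1 a) * V1 a $ ?x * cnj (V1 a $ ?x')) * (complex_of_real (P2 b) * V2 b $ ?y * cnj (V2 b $ ?y'))))"
    unfolding sum_rect
    by (intro sum.cong refl) (simp only: vt_entry[OF g(1)] vt_entry[OF g(2)] divmod_aux, simp add: algebra_simps)
  also have "\<dots> = complex_of_real c * (\<Sum>a<K1. \<Sum>b<K2.
       ((complex_of_real (P1 a) * V1 a $ ?x * cnj (V1 a $ ?x')) * (complex_of_real (P2 b) * V2 b $ ?y * cnj (V2 b $ ?y'))))"
    by (simp add: sum_distrib_left)
  also have "(\<Sum>a<K1. \<Sum>b<K2.
       ((complex_of_real (P1 a) * V1 a $ ?x * cnj (V1 a $ ?x')) * (complex_of_real (P2 b) * V2 b $ ?y * cnj (V2 b $ ?y'))))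
     = (\<Sum>a<K1. complex_of_real (P1 a) * V1 a $ ?x * cnj (V1 a $ ?x'))
       * (\<Sum>b<K2. complex_of_real (P2 b) * V2 b $ ?y * cnj (V2 b $ ?y'))"
    by (rule sum_product[symmetric])
  finally show ?thesis
    using mixture_flist_entry[OF V1 i(1,2), where P = P1] mixture_flist_entry[OF V2 i(3,4), where P = P2]
    by (simp add: mult.assoc)
qed

lemma idx_pt:
  assumes g: "g < (d1*d2)*(d1*d2)" and g': "g' < (d1*d2)*(d1*d2)"
  defines "G \<equiv> (g div (d1*d2)) * (d1*d2) + g' mod (d1*d2)"
  shows "G < (d1*d2)*(d1*d2)" "idx1 d1 d2 G = ptp d1 (idx1 d1 d2 g) (idx1 d1 d2 g')"
    "idx2 d1 d2 G = ptp d2 (idx2 d1 d2 g) (idx2 d1 d2 g')"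
proof -
  define D where "D = d1 * d2"
  have q: "g div D < D" "g' mod D < D" "g mod D < D" using div_lt_aux g g' unfolding D_def by auto
  have a: "g div D div d2 < d1" "g div D mod d2 < d2" "g mod D div d2 < d1" "g mod D mod d2 < d2"
     "g' mod D div d2 < d1" "g' mod D mod d2 < d2"
    using div_lt_aux q unfolding D_def by auto
  have G: "G = (g div D) * D + g' mod D" unfolding G_def D_def ..
  show "G < (d1*d2)*(d1*d2)" unfolding G D_def[symmetric] using lt_prod_aux q by blast
  show "idx1 d1 d2 G = ptp d1 (idx1 d1 d2 g) (idx1 d1 d2 g')"
    unfolding idx1_def ptp_def D_def[symmetric] G divmod_aux[OF q(2)] divmod_aux[OF a(3)] divmod_aux[OF a(5)]
    by simp
  show "idx2 d1 d2 G = ptp d2 (idx2 d1 d2 g) (idx2 d1 d2 g')"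
    unfolding idx2_def ptp_def D_def[symmetric] G divmod_aux[OF q(2)] divmod_aux[OF a(4)] divmod_aux[OF a(6)]
    by simp
qed

definition cc :: "nat \<Rightarrow> nat \<Rightarrow> real" where "cc d1 d2 = (real d1 - 1) * (real d2 + 1)"

lemma Zop_entry:
  assumes g: "g < (d1*d2)*(d1*d2)" and g': "g' < (d1*d2)*(d1*d2)"
  shows "Zop d1 d2 $$ (g,g') =
     (1\<^sub>m (d1*d1) - omega d1) $$ (idx1 d1 d2 g, idx1 d1 d2 g') * (1\<^sub>m (d2*d2) - omega d2) $$ (idx2 d1 d2 g, idx2 d1 d2 g')
     + complex_of_real (cc d1 d2) * (omega d1 $$ (idx1 d1 d2 g, idx1 d1 d2 g') * omega d2 $$ (idx2 d1 d2 g, idx2 d1 d2 g'))"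
  using g g' by (simp add: Zop_def tensor12_def cc_def)

lemma Zop_carrier: "Zop d1 d2 \<in> carrier_mat ((d1*d2)*(d1*d2)) ((d1*d2)*(d1*d2))"
  by (simp add: Zop_def tensor12_def)

lemma Zop_real:
  assumes g: "g < (d1*d2)*(d1*d2)" and g': "g' < (d1*d2)*(d1*d2)"
  shows "Zop d1 d2 $$ (g,g') = complex_of_real (
     (dl (idx1 d1 d2 g) (idx1 d1 d2 g') - dgi d1 (idx1 d1 d2 g) * dgi d1 (idx1 d1 d2 g') / real d1)
   * (dl (idx2 d1 d2 g) (idx2 d1 d2 g') - dgi d2 (idx2 d1 d2 g) * dgi d2 (idx2 d1 d2 g') / real d2)
   + cc d1 d2 * ((dgi d1 (idx1 d1 d2 g) * dgi d1 (idx1 d1 d2 g') / real d1)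
       * (dgi d2 (idx2 d1 d2 g) * dgi d2 (idx2 d1 d2 g') / real d2)))"
proof -
  have i: "idx1 d1 d2 g < d1*d1" "idx1 d1 d2 g' < d1*d1" "idx2 d1 d2 g < d2*d2" "idx2 d1 d2 g' < d2*d2"
    using enc_idx g g' by auto
  show ?thesis unfolding Zop_entry[OF g g'] one_minus_omega_entry[OF i(1,2)] one_minus_omega_entry[OF i(3,4)]
    omega_entry[OF i(1,2)] omega_entry[OF i(3,4)] by simp
qed

lemma ZG_real:
  assumes g: "g < (d1*d2)*(d1*d2)" and g': "g' < (d1*d2)*(d1*d2)"
  shows "partial_transpose (d1*d2) (d1*d2) (Zop d1 d2) $$ (g,g') = complex_of_real (
     (dl (idx1 d1 d2 g) (idx1 d1 d2 g') - Fi d1 (idx1 d1 d2 g) (idx1 d1 d2 g') / real d1)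
   * (dl (idx2 d1 d2 g) (idx2 d1 d2 g') - Fi d2 (idx2 d1 d2 g) (idx2 d1 d2 g') / real d2)
   + cc d1 d2 * ((Fi d1 (idx1 d1 d2 g) (idx1 d1 d2 g') / real d1)
       * (Fi d2 (idx2 d1 d2 g) (idx2 d1 d2 g') / real d2)))"
proof -
  have i: "idx1 d1 d2 g < d1*d1" "idx1 d1 d2 g' < d1*d1" "idx2 d1 d2 g < d2*d2" "idx2 d1 d2 g' < d2*d2"
    using enc_idx g g' by auto
  have "partial_transpose (d1*d2) (d1*d2) (Zop d1 d2) $$ (g,g')
    = Zop d1 d2 $$ ((g div (d1*d2)) * (d1*d2) + g' mod (d1*d2), (g' div (d1*d2)) * (d1*d2) + g mod (d1*d2))"
    using g g' by (simp add: partial_transpose_def)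
  also have "\<dots> = complex_of_real (
     (dl (ptp d1 (idx1 d1 d2 g) (idx1 d1 d2 g')) (ptp d1 (idx1 d1 d2 g') (idx1 d1 d2 g))
       - dgi d1 (ptp d1 (idx1 d1 d2 g) (idx1 d1 d2 g')) * dgi d1 (ptp d1 (idx1 d1 d2 g') (idx1 d1 d2 g)) / real d1)
   * (dl (ptp d2 (idx2 d1 d2 g) (idx2 d1 d2 g')) (ptp d2 (idx2 d1 d2 g') (idx2 d1 d2 g))
       - dgi d2 (ptp d2 (idx2 d1 d2 g) (idx2 d1 d2 g')) * dgi d2 (ptp d2 (idx2 d1 d2 g') (idx2 d1 d2 g)) / real d2)
   + cc d1 d2 * ((dgi d1 (ptp d1 (idx1 d1 d2 g) (idx1 d1 d2 g')) * dgi d1 (ptp d1 (idx1 d1 d2 g') (idx1 d1 d2 g)) / real d1)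
       * (dgi d2 (ptp d2 (idx2 d1 d2 g) (idx2 d1 d2 g')) * dgi d2 (ptp d2 (idx2 d1 d2 g') (idx2 d1 d2 g)) / real d2)))"
    unfolding Zop_real[OF idx_pt(1)[OF g g'] idx_pt(1)[OF g' g]] idx_pt[OF g g'] idx_pt[OF g' g] ..
  also have "\<dots> = complex_of_real (
     (dl (idx1 d1 d2 g) (idx1 d1 d2 g') - Fi d1 (idx1 d1 d2 g) (idx1 d1 d2 g') / real d1)
   * (dl (idx2 d1 d2 g) (idx2 d1 d2 g') - Fi d2 (idx2 d1 d2 g) (idx2 d1 d2 g') / real d2)
   + cc d1 d2 * ((Fi d1 (idx1 d1 d2 g) (idx1 d1 d2 g') / real d1)
       * (Fi d2 (idx2 d1 d2 g) (idx2 d1 d2 g') / real d2)))"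
    unfolding ptp_facts[OF i(1,2)] ptp_facts[OF i(3,4)] ..
  finally show ?thesis .
qed

lemma mixture_append_entry:
  assumes "\<forall>(p,\<psi>)\<in>set xs. \<psi> \<in> carrier_vec n" "\<forall>(p,\<psi>)\<in>set ys. \<psi> \<in> carrier_vec n" "i < n" "j < n"
  shows "mixture n (xs @ ys) $$ (i,j) = mixture n xs $$ (i,j) + mixture n ys $$ (i,j)"
proof -
  have "\<forall>(p,\<psi>)\<in>set (xs @ ys). \<psi> \<in> carrier_vec n" using assms by auto
  thus ?thesis using mixture_entry[OF _ assms(3,4)] assms by simp
qed

lemma mixture_single_entry:
  assumes "\<psi> \<in> carrier_vec n" "i < n" "j < n"
  shows "mixture n [(p,\<psi>)] $$ (i,j) = complex_of_real p * \<psi> $ i * cnj (\<psi> $ j)"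
  using assms by (simp add: mixture_entry)

lemma set_flist: "set (flist K P V) = (\<lambda>z. (P z, V z)) ` {..<K}"
  by (auto simp: flist_def)

lemma set_prodL: "set (prodL d1 d2 c K1 P1 V1 K2 P2 V2) =
  (\<lambda>z. (c * P1 (z div K2) * P2 (z mod K2), vt d1 d2 (V1 (z div K2)) (V2 (z mod K2)))) ` {..<K1*K2}"
  unfolding prodL_def set_flist ..

lemma prodL_carrier: "\<forall>(p,\<psi>)\<in>set (prodL d1 d2 c K1 P1 V1 K2 P2 V2). \<psi> \<in> carrier_vec ((d1*d2)*(d1*d2))"
  unfolding set_prodL using vt_carrier by auto

definition LZ :: "nat \<Rightarrow> nat \<Rightarrow> (real \<times> complex vec) list" where
  "LZ d1 d2 = prodL d1 d2 1 (d1*d1) (\<lambda>_. 1) (nu d1) (d2*d2) (\<lambda>_. 1) (nu d2)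
     @ [(cc d1 d2, vt d1 d2 (Omega_vec d1) (Omega_vec d2))]"

lemma LZ_carrier: "\<forall>(p,\<psi>)\<in>set (LZ d1 d2). \<psi> \<in> carrier_vec ((d1*d2)*(d1*d2))"
  using prodL_carrier vt_carrier unfolding LZ_def by auto

lemma omega_ketbra_entry: "x < d*d \<Longrightarrow> x' < d*d \<Longrightarrow> omega d $$ (x,x') = Omega_vec d $ x * cnj (Omega_vec d $ x')"
  unfolding omega_def using Omega_carrier[of d] by (simp add: ketbra_entry)

lemma Zop_LZ: "Zop d1 d2 = mixture ((d1*d2)*(d1*d2)) (LZ d1 d2)"
proof (rule eq_matI)
  show "dim_row (Zop d1 d2) = dim_row (mixture ((d1*d2)*(d1*d2)) (LZ d1 d2))"
    using Zop_carrier mixture_carrier by (metis carrier_matD(1))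
  show "dim_col (Zop d1 d2) = dim_col (mixture ((d1*d2)*(d1*d2)) (LZ d1 d2))"
    using Zop_carrier mixture_carrier by (metis carrier_matD(2))
  fix g g' assume "g < dim_row (mixture ((d1*d2)*(d1*d2)) (LZ d1 d2))" "g' < dim_col (mixture ((d1*d2)*(d1*d2)) (LZ d1 d2))"
  hence g: "g < (d1*d2)*(d1*d2)" "g' < (d1*d2)*(d1*d2)" using mixture_carrier by (metis carrier_matD)+
  have i: "idx1 d1 d2 g < d1*d1" "idx1 d1 d2 g' < d1*d1" "idx2 d1 d2 g < d2*d2" "idx2 d1 d2 g' < d2*d2"
    using enc_idx g by auto
  have "mixture ((d1*d2)*(d1*d2)) (LZ d1 d2) $$ (g,g')
    = complex_of_real 1 * mixture (d1*d1) (flist (d1*d1) (\<lambda>_. 1) (nu d1)) $$ (idx1 d1 d2 g, idx1 d1 d2 g')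
       * mixture (d2*d2) (flist (d2*d2) (\<lambda>_. 1) (nu d2)) $$ (idx2 d1 d2 g, idx2 d1 d2 g')
      + complex_of_real (cc d1 d2) * vt d1 d2 (Omega_vec d1) (Omega_vec d2) $ g
         * cnj (vt d1 d2 (Omega_vec d1) (Omega_vec d2) $ g')"
    unfolding LZ_def
    by (subst mixture_append_entry[OF prodL_carrier _ g], simp add: vt_carrier,
        subst prodL_entry[OF nu_carrier nu_carrier g], subst mixture_single_entry[OF vt_carrier g], rule refl)
  also have "\<dots> = Zop d1 d2 $$ (g,g')"
    unfolding Zop_entry[OF g] nu_entry[OF i(1,2)] nu_entry[OF i(3,4)]
      one_minus_omega_entry[OF i(1,2)] one_minus_omega_entry[OF i(3,4)]
      omega_ketbra_entry[OF i(1,2)] omega_ketbra_entry[OF i(3,4)] vt_entry[OF g(1)] vt_entry[OF g(2)]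
    by (simp add: algebra_simps)
  finally show "Zop d1 d2 $$ (g,g') = mixture ((d1*d2)*(d1*d2)) (LZ d1 d2) $$ (g,g')" ..
qed

definition al :: "nat \<Rightarrow> nat \<Rightarrow> real" where
  "al d1 d2 = (1 - 1/real d1) * (1 - 1/real d2) + (real d1 - 1) * (real d2 + 1) / (real d1 * real d2)"
definition be :: "nat \<Rightarrow> nat \<Rightarrow> real" where
  "be d1 d2 = 2 * (real d2 - real d1) / (real d1 * real d2)"
definition ga :: "nat \<Rightarrow> nat \<Rightarrow> real" where
  "ga d1 d2 = (1 + 1/real d1) * (1 + 1/real d2) + (real d1 - 1) * (real d2 + 1) / (real d1 * real d2)"

lemma key_identity:
  fixes a1 f1 a2 f2 d1 d2 :: real
  assumes "d1 > 0" "d2 > 0"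
  shows "(a1 - f1 / d1) * (a2 - f2 / d2) + ((d1 - 1) * (d2 + 1)) * ((f1 / d1) * (f2 / d2))
   = ((1 - 1/d1) * (1 - 1/d2) + (d1 - 1) * (d2 + 1) / (d1 * d2)) * ((a1 + 1 * f1) / 2 * ((a2 + 1 * f2) / 2))
   + (2 * (d2 - d1) / (d1 * d2)) * ((a1 + (-1) * f1) / 2 * ((a2 + 1 * f2) / 2))
   + ((1 + 1/d1) * (1 + 1/d2) + (d1 - 1) * (d2 + 1) / (d1 * d2)) * ((a1 + (-1) * f1) / 2 * ((a2 + (-1) * f2) / 2))"
  using assms by (simp add: field_simps)

definition LG0 :: "nat \<Rightarrow> nat \<Rightarrow> (real \<times> complex vec) list" where
  "LG0 d1 d2 = prodL d1 d2 (al d1 d2) (d1*d1) (\<lambda>_. 1/4) (sv d1 1) (d2*d2) (\<lambda>_. 1/4) (sv d2 1)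
    @ prodL d1 d2 (be d1 d2) (d1*d1) (\<lambda>_. 1/4) (sv d1 (-1)) (d2*d2) (\<lambda>_. 1/4) (sv d2 1)
    @ prodL d1 d2 (ga d1 d2) (d1*d1) (\<lambda>_. 1/4) (sv d1 (-1)) (d2*d2) (\<lambda>_. 1/4) (sv d2 (-1))"

definition LG :: "nat \<Rightarrow> nat \<Rightarrow> (real \<times> complex vec) list" where
  "LG d1 d2 = filter (\<lambda>x. fst x > 0) (LG0 d1 d2)"

lemma LG0_carrier: "\<forall>(p,\<psi>)\<in>set (LG0 d1 d2). \<psi> \<in> carrier_vec ((d1*d2)*(d1*d2))"
  using prodL_carrier unfolding LG0_def set_append by blast

lemma ZG_LG0:
  assumes d: "0 < d1" "0 < d2"
  shows "partial_transpose (d1*d2) (d1*d2) (Zop d1 d2) = mixture ((d1*d2)*(d1*d2)) (LG0 d1 d2)"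
proof (rule eq_matI)
  have pc: "partial_transpose (d1*d2) (d1*d2) (Zop d1 d2) \<in> carrier_mat ((d1*d2)*(d1*d2)) ((d1*d2)*(d1*d2))"
    by (simp add: partial_transpose_def)
  have mc: "mixture ((d1*d2)*(d1*d2)) (LG0 d1 d2) \<in> carrier_mat ((d1*d2)*(d1*d2)) ((d1*d2)*(d1*d2))"
    by (rule mixture_carrier)
  show "dim_row (partial_transpose (d1*d2) (d1*d2) (Zop d1 d2)) = dim_row (mixture ((d1*d2)*(d1*d2)) (LG0 d1 d2))"
    using carrier_matD(1)[OF pc] carrier_matD(1)[OF mc] by simp
  show "dim_col (partial_transpose (d1*d2) (d1*d2) (Zop d1 d2)) = dim_col (mixture ((d1*d2)*(d1*d2)) (LG0 d1 d2))"
    using carrier_matD(2)[OF pc] carrier_matD(2)[OF mc] by simp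
  fix g g' assume "g < dim_row (mixture ((d1*d2)*(d1*d2)) (LG0 d1 d2))" "g' < dim_col (mixture ((d1*d2)*(d1*d2)) (LG0 d1 d2))"
  hence g: "g < (d1*d2)*(d1*d2)" "g' < (d1*d2)*(d1*d2)" using mixture_carrier by (metis carrier_matD)+
  have i: "idx1 d1 d2 g < d1*d1" "idx1 d1 d2 g' < d1*d1" "idx2 d1 d2 g < d2*d2" "idx2 d1 d2 g' < d2*d2"
    using enc_idx g by auto
  have s1: "(1::real) * 1 = 1" and s2: "(-1::real) * (-1) = 1" by simp_all
  have c23: "\<forall>(p,\<psi>)\<in>set (prodL d1 d2 (be d1 d2) (d1*d1) (\<lambda>_. 1/4) (sv d1 (-1)) (d2*d2) (\<lambda>_. 1/4) (sv d2 1)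
    @ prodL d1 d2 (ga d1 d2) (d1*d1) (\<lambda>_. 1/4) (sv d1 (-1)) (d2*d2) (\<lambda>_. 1/4) (sv d2 (-1))).
     \<psi> \<in> carrier_vec ((d1*d2)*(d1*d2))"
    using prodL_carrier unfolding set_append by blast
  note e = sv_entry[OF i(1,2) s1] sv_entry[OF i(3,4) s1] sv_entry[OF i(1,2) s2] sv_entry[OF i(3,4) s2]
  have "mixture ((d1*d2)*(d1*d2)) (LG0 d1 d2) $$ (g,g') = complex_of_real (
      al d1 d2 * ((dl (idx1 d1 d2 g) (idx1 d1 d2 g') + 1 * Fi d1 (idx1 d1 d2 g) (idx1 d1 d2 g')) / 2
          * ((dl (idx2 d1 d2 g) (idx2 d1 d2 g') + 1 * Fi d2 (idx2 d1 d2 g) (idx2 d1 d2 g')) / 2))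
    + be d1 d2 * ((dl (idx1 d1 d2 g) (idx1 d1 d2 g') + (-1) * Fi d1 (idx1 d1 d2 g) (idx1 d1 d2 g')) / 2
          * ((dl (idx2 d1 d2 g) (idx2 d1 d2 g') + 1 * Fi d2 (idx2 d1 d2 g) (idx2 d1 d2 g')) / 2))
    + ga d1 d2 * ((dl (idx1 d1 d2 g) (idx1 d1 d2 g') + (-1) * Fi d1 (idx1 d1 d2 g) (idx1 d1 d2 g')) / 2
          * ((dl (idx2 d1 d2 g) (idx2 d1 d2 g') + (-1) * Fi d2 (idx2 d1 d2 g) (idx2 d1 d2 g')) / 2)))"
    unfolding LG0_def mixture_append_entry[OF prodL_carrier c23 g]
      mixture_append_entry[OF prodL_carrier prodL_carrier g] prodL_entry[OF sv_carrier sv_carrier g] e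
    by (simp add: mult.assoc)
  also have "\<dots> = partial_transpose (d1*d2) (d1*d2) (Zop d1 d2) $$ (g,g')"
    unfolding ZG_real[OF g] al_def be_def ga_def cc_def
    using key_identity[of "real d1" "real d2"] d by simp
  finally show "partial_transpose (d1*d2) (d1*d2) (Zop d1 d2) $$ (g,g') = mixture ((d1*d2)*(d1*d2)) (LG0 d1 d2) $$ (g,g')" ..
qed

lemma mixture_filter_pos:
  assumes "\<forall>(p,\<psi>)\<in>set ps. p \<ge> 0 \<and> \<psi> \<in> carrier_vec n"
  shows "mixture n (filter (\<lambda>x. fst x > 0) ps) = mixture n ps"
proof (rule eq_matI)
  show "dim_row (mixture n (filter (\<lambda>x. fst x > 0) ps)) = dim_row (mixture n ps)"
    using mixture_carrier by (metis carrier_matD(1))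
  show "dim_col (mixture n (filter (\<lambda>x. fst x > 0) ps)) = dim_col (mixture n ps)"
    using mixture_carrier by (metis carrier_matD(2))
  fix i j assume "i < dim_row (mixture n ps)" "j < dim_col (mixture n ps)"
  hence ij: "i < n" "j < n" using mixture_carrier by (metis carrier_matD)+
  have c1: "\<forall>(p,\<psi>)\<in>set (filter (\<lambda>x. fst x > 0) ps). \<psi> \<in> carrier_vec n" using assms by auto
  have c2: "\<forall>(p,\<psi>)\<in>set ps. \<psi> \<in> carrier_vec n" using assms by auto
  show "mixture n (filter (\<lambda>x. fst x > 0) ps) $$ (i,j) = mixture n ps $$ (i,j)"
    unfolding mixture_entry[OF c1 ij] mixture_entry[OF c2 ij]
    by (rule sum_list_map_filter, insert assms, auto)
qed

lemma ZG_LG: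
  assumes d: "0 < d1" "d1 \<le> d2"
  shows "partial_transpose (d1*d2) (d1*d2) (Zop d1 d2) = mixture ((d1*d2)*(d1*d2)) (LG d1 d2)"
proof -
  have "al d1 d2 \<ge> 0" "be d1 d2 \<ge> 0" "ga d1 d2 \<ge> 0" using d
    by (auto simp: al_def be_def ga_def intro!: add_nonneg_nonneg mult_nonneg_nonneg divide_nonneg_nonneg)
  hence nn: "\<forall>(p,\<psi>)\<in>set (LG0 d1 d2). p \<ge> 0 \<and> \<psi> \<in> carrier_vec ((d1*d2)*(d1*d2))"
    unfolding LG0_def set_append set_prodL using vt_carrier by auto
  show ?thesis unfolding LG_def mixture_filter_pos[OF nn] using ZG_LG0 d by simp
qed

lemma schmidt_rank_le:
  assumes psi: "\<psi> \<in> carrier_vec (n*n)"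
    and dec: "\<And>a b. a < n \<Longrightarrow> b < n \<Longrightarrow> \<psi> $ (a*n+b) = (\<Sum>t<k. F t a * G t b)"
  shows "schmidt_rank n n \<psi> \<le> k"
proof -
  define H where "H t b' = (\<Sum>a<n. F t a * cnj (\<psi> $ (a*n+b')))" for t b'
  have "ptrace_A n n (ketbra \<psi> \<psi>) = mat n n (\<lambda>(b,b'). \<Sum>t<k. G t b * H t b')"
  proof (rule eq_matI)
    fix b b' assume "b < dim_row (mat n n (\<lambda>(b,b'). \<Sum>t<k. G t b * H t b'))"
      "b' < dim_col (mat n n (\<lambda>(b,b'). \<Sum>t<k. G t b * H t b'))"
    hence bb: "b < n" "b' < n" by auto
    have "ptrace_A n n (ketbra \<psi> \<psi>) $$ (b,b') = (\<Sum>a<n. \<psi> $ (a*n+b) * cnj (\<psi> $ (a*n+b')))"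
      unfolding ptrace_A_def using bb psi lt_prod_aux by (simp add: ketbra_entry)
    also have "\<dots> = (\<Sum>a<n. \<Sum>t<k. G t b * (F t a * cnj (\<psi> $ (a*n+b'))))"
    proof (intro sum.cong refl)
      fix a assume "a \<in> {..<n}"
      hence a: "a < n" by simp
      show "\<psi> $ (a*n+b) * cnj (\<psi> $ (a*n+b')) = (\<Sum>t<k. G t b * (F t a * cnj (\<psi> $ (a*n+b'))))"
        unfolding dec[OF a bb(1)] sum_distrib_right by (simp add: mult_ac)
    qed
    also have "\<dots> = (\<Sum>t<k. G t b * H t b')"
      unfolding H_def by (subst sum.swap) (simp add: sum_distrib_left)
    finally show "ptrace_A n n (ketbra \<psi> \<psi>) $$ (b,b') = mat n n (\<lambda>(b,b'). \<Sum>t<k. G t b * H t b') $$ (b,b')"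
      using bb by simp
  qed (auto simp: ptrace_A_def)
  thus ?thesis unfolding schmidt_rank_def using rank_sum_rank1[where F = G and G = H and n = n and m = n and k = k] by simp
qed

lemma dl_enc: "b < d \<Longrightarrow> e < d \<Longrightarrow> dl (a*d+b) (c*d+e) = dl a c * dl b e"
proof -
  assume be: "b < d" "e < d"
  have "(a*d+b = c*d+e) = (a = c \<and> b = e)"
  proof
    assume eq: "a*d+b = c*d+e"
    have "a = c" using arg_cong[OF eq, of "\<lambda>x. x div d"] divmod_aux[OF be(1)] divmod_aux[OF be(2)] by simp
    moreover have "b = e" using arg_cong[OF eq, of "\<lambda>x. x mod d"] divmod_aux[OF be(1)] divmod_aux[OF be(2)] by simp
    ultimately show "a = c \<and> b = e" ..
  qed auto
  thus ?thesis unfolding dl_def by simp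
qed

lemma sum2: "(\<Sum>r<(2::nat). F r) = F 0 + F 1" by (simp add: eval_nat_numeral)
lemma sum4: "(\<Sum>r<(4::nat). F r) = F 0 + F 1 + F 2 + F 3" by (simp add: eval_nat_numeral)

lemma sv_rank2:
  assumes z: "z < d*d" and ab: "a < d" "b < d"
  shows "sv d s z $ (a*d+b) = (\<Sum>r<(2::nat). (if r = 0 then complex_of_real (dl a (z div d)) else complex_of_real (s * dl a (z mod d)))
       * (if r = 0 then complex_of_real (dl b (z mod d)) else complex_of_real (dl b (z div d))))"
proof -
  have zz: "z div d < d" "z mod d < d" using div_lt_aux[OF z] by auto
  have "a * d + b < d * d" using lt_prod_aux ab by blast
  hence "sv d s z $ (a*d+b) = complex_of_real (dl (a*d+b) z + s * dl (a*d+b) (sw d z))" by (simp add: sv_def)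
  also have "dl (a*d+b) z = dl a (z div d) * dl b (z mod d)"
    using dl_enc[OF ab(2) zz(2), of a "z div d"] by simp
  also have "dl (a*d+b) (sw d z) = dl a (z mod d) * dl b (z div d)"
    unfolding sw_def using dl_enc[OF ab(2) zz(1)] .
  finally show ?thesis unfolding sum2 by (simp add: algebra_simps)
qed

lemma vt_rank:
  fixes f g h k :: "nat \<Rightarrow> nat \<Rightarrow> complex"
  assumes u: "u \<in> carrier_vec (d1*d1)" and v: "v \<in> carrier_vec (d2*d2)"
    and hu: "\<And>a b. a < d1 \<Longrightarrow> b < d1 \<Longrightarrow> u $ (a*d1+b) = (\<Sum>r<2. f r a * g r b)"
    and hv: "\<And>a b. a < d2 \<Longrightarrow> b < d2 \<Longrightarrow> v $ (a*d2+b) = (\<Sum>r<2. h r a * k r b)"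
  shows "schmidt_rank (d1*d2) (d1*d2) (vt d1 d2 u v) \<le> 4"
proof (rule schmidt_rank_le[OF vt_carrier, where F = "\<lambda>t a. f (t div 2) (a div d2) * h (t mod 2) (a mod d2)"
      and G = "\<lambda>t b. g (t div 2) (b div d2) * k (t mod 2) (b mod d2)"])
  fix a b assume a: "a < d1*d2" and b: "b < d1*d2"
  have ab: "a*(d1*d2)+b < (d1*d2)*(d1*d2)" using lt_prod_aux a b by blast
  have q: "a div d2 < d1" "a mod d2 < d2" "b div d2 < d1" "b mod d2 < d2" using div_lt_aux a b by auto
  have i1: "idx1 d1 d2 (a*(d1*d2)+b) = (a div d2) * d1 + b div d2"
    unfolding idx1_def divmod_aux[OF b] ..
  have i2: "idx2 d1 d2 (a*(d1*d2)+b) = (a mod d2) * d2 + b mod d2"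
    unfolding idx2_def divmod_aux[OF b] ..
  show "vt d1 d2 u v $ (a*(d1*d2)+b) = (\<Sum>t<4. f (t div 2) (a div d2) * h (t mod 2) (a mod d2)
      * (g (t div 2) (b div d2) * k (t mod 2) (b mod d2)))"
    unfolding vt_entry[OF ab] i1 i2 hu[OF q(1,3)] hv[OF q(2,4)] sum2 sum4
    by (simp add: algebra_simps)
qed

lemma LG_rank:
  assumes "(p,\<psi>) \<in> set (LG d1 d2)"
  shows "schmidt_rank (d1*d2) (d1*d2) \<psi> \<le> 4 \<and> p > 0 \<and> \<psi> \<in> carrier_vec ((d1*d2)*(d1*d2))"
proof -
  have pos: "p > 0" using assms unfolding LG_def by auto
  have "(p,\<psi>) \<in> set (LG0 d1 d2)" using assms unfolding LG_def by auto
  then obtain z s1 s2 where z: "z < (d1*d1)*(d2*d2)"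
    and psi: "\<psi> = vt d1 d2 (sv d1 s1 (z div (d2*d2))) (sv d2 s2 (z mod (d2*d2)))"
    unfolding LG0_def set_append set_prodL by auto
  have z1: "z div (d2*d2) < d1*d1" and z2: "z mod (d2*d2) < d2*d2" using div_lt_aux z by auto
  have "schmidt_rank (d1*d2) (d1*d2) \<psi> \<le> 4"
    unfolding psi by (rule vt_rank[OF sv_carrier sv_carrier sv_rank2[OF z1] sv_rank2[OF z2]])
  thus ?thesis using pos psi vt_carrier by simp
qed

lemma SN_ZG: 
  assumes "0 < d1" "d1 \<le> d2"
  shows "SN (d1*d2) (d1*d2) (partial_transpose (d1*d2) (d1*d2) (Zop d1 d2)) \<le> 4"
  unfolding SN_def
proof (rule Least_le)
  show "\<exists>ps. partial_transpose (d1*d2) (d1*d2) (Zop d1 d2) = mixture ((d1*d2)*(d1*d2)) ps \<and>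
      (\<forall>(p,\<psi>)\<in>set ps. p > 0 \<and> \<psi> \<in> carrier_vec ((d1*d2)*(d1*d2)) \<and> schmidt_rank (d1*d2) (d1*d2) \<psi> \<le> 4)"
    using ZG_LG[OF assms] LG_rank by blast
qed

lemma sum_list_map_zero: "(\<And>x. x \<in> set xs \<Longrightarrow> f x = 0) \<Longrightarrow> sum_list (map f xs) = 0"
  by (induction xs) auto

lemma ip_nu_Omega:
  assumes "z < d*d"
  shows "conjugate (nu d z) \<bullet> Omega_vec d = 0"
proof -
  have d: "d > 0" using assms by (cases d) auto
  have r: "(\<Sum>x<d*d. (dl x z - dgi d z * dgi d x / real d) * (dgi d x / sqrt (real d))) = 0"
  proof -
    have "(\<Sum>x<d*d. (dl x z - dgi d z * dgi d x / real d) * (dgi d x / sqrt (real d)))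
     = (\<Sum>x<d*d. dl z x * (dgi d x / sqrt (real d))
      - (dgi d z / (real d * sqrt (real d))) * (dgi d x * dgi d x))"
      by (intro sum.cong refl) (simp add: dl_sym[of _ z] algebra_simps)
    also have "\<dots> = dgi d z / sqrt (real d) - (dgi d z / (real d * sqrt (real d))) * real d"
    proof -
      have s1: "(\<Sum>x<d*d. dl z x * (dgi d x / sqrt (real d))) = dgi d z / sqrt (real d)"
        using sum_dl[OF assms, of "\<lambda>x. dgi d x / sqrt (real d)"] .
      have s2: "(\<Sum>x<d*d. (dgi d z / (real d * sqrt (real d))) * (dgi d x * dgi d x))
          = (dgi d z / (real d * sqrt (real d))) * real d"
        unfolding dgi_sq sum_distrib_left[symmetric] sum_dgi ..
      show ?thesis by (simp only: sum_subtractf s1 s2)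
    qed
    also have "\<dots> = 0" using d by simp
    finally show ?thesis .
  qed
  have "conjugate (nu d z) \<bullet> Omega_vec d = (\<Sum>x<d*d. cnj (nu d z $ x) * Omega_vec d $ x)"
    by (rule ip_expand[OF nu_carrier Omega_carrier])
  also have "\<dots> = complex_of_real (\<Sum>x<d*d. (dl x z - dgi d z * dgi d x / real d) * (dgi d x / sqrt (real d)))"
    unfolding of_real_sum
    by (intro sum.cong refl) (simp add: nu_def Omega_entry)
  finally show ?thesis unfolding r by simp
qed

lemma ip_Omega_Omega:
  assumes "d > 0"
  shows "conjugate (Omega_vec d) \<bullet> Omega_vec d = 1"
proof -
  have "conjugate (Omega_vec d) \<bullet> Omega_vec d = (\<Sum>x<d*d. cnj (Omega_vec d $ x) * Omega_vec d $ x)"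
    by (rule ip_expand[OF Omega_carrier Omega_carrier])
  also have "\<dots> = complex_of_real (\<Sum>x<d*d. dgi d x / real d)"
    unfolding of_real_sum
  proof (intro sum.cong refl)
    fix x assume "x \<in> {..<d*d}"
    hence x: "x < d*d" by simp
    have "dgi d x / sqrt (real d) * (dgi d x / sqrt (real d)) = dgi d x * dgi d x / (sqrt (real d) * sqrt (real d))"
      by (rule times_divide_times_eq)
    also have "\<dots> = dgi d x / real d" by (simp add: dgi_sq)
    finally show "cnj (Omega_vec d $ x) * Omega_vec d $ x = complex_of_real (dgi d x / real d)"
      unfolding Omega_entry[OF x] by (metis complex_cnj_complex_of_real of_real_mult)
  qed
  also have "(\<Sum>x<d*d. dgi d x / real d) = 1" using assms
    by (simp add: sum_divide_distrib[symmetric] sum_dgi)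
  finally show ?thesis by simp
qed

lemma LZ_qf:
  assumes d: "d1 > 0" "d2 > 0" and x: "x \<in> carrier_vec (d2*d2)"
  shows "(\<Sum>(p,\<psi>)\<leftarrow>LZ d1 d2. p * (cmod (conjugate \<psi> \<bullet> vt d1 d2 (Omega_vec d1) x))\<^sup>2)
    = cc d1 d2 * (cmod (conjugate (Omega_vec d2) \<bullet> x))\<^sup>2"
proof -
  have 0: "(\<Sum>(p,\<psi>)\<leftarrow>prodL d1 d2 1 (d1*d1) (\<lambda>_. 1) (nu d1) (d2*d2) (\<lambda>_. 1) (nu d2).
        p * (cmod (conjugate \<psi> \<bullet> vt d1 d2 (Omega_vec d1) x))\<^sup>2) = 0"
  proof (rule sum_list_map_zero)
    fix y assume "y \<in> set (prodL d1 d2 1 (d1*d1) (\<lambda>_. 1) (nu d1) (d2*d2) (\<lambda>_. 1) (nu d2))"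
    then obtain z where z: "z < (d1*d1)*(d2*d2)"
      and y: "y = (1, vt d1 d2 (nu d1 (z div (d2*d2))) (nu d2 (z mod (d2*d2))))"
      unfolding set_prodL by auto
    have z1: "z div (d2*d2) < d1*d1" using div_lt_aux z by auto
    show "(case y of (p,\<psi>) \<Rightarrow> p * (cmod (conjugate \<psi> \<bullet> vt d1 d2 (Omega_vec d1) x))\<^sup>2) = 0"
      unfolding y using ip_vt[OF nu_carrier Omega_carrier nu_carrier x] ip_nu_Omega[OF z1] by simp
  qed
  show ?thesis unfolding LZ_def sum_list_append map_append 0
    using ip_vt[OF Omega_carrier Omega_carrier Omega_carrier x] ip_Omega_Omega[OF d(1)] by simp
qed

definition Cc :: "nat \<Rightarrow> nat \<Rightarrow> complex vec \<Rightarrow> nat \<Rightarrow> complex" where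
  "Cc d1 d2 \<psi> y = (\<Sum>i<d1. cnj (\<psi> $ enc d1 d2 (i*d1+i) y))"

lemma sum_dlc: "x < n \<Longrightarrow> (\<Sum>z<n. complex_of_real (dl x z) * f z) = f x"
proof -
  assume x: "x < n"
  have "(\<Sum>z<n. complex_of_real (dl x z) * f z) = (\<Sum>z<n. if z = x then f x else 0)"
    by (intro sum.cong refl) (auto simp: dl_def)
  thus ?thesis using x by simp
qed

lemma ip_vt_Omega:
  assumes psi: "\<psi> \<in> carrier_vec ((d1*d2)*(d1*d2))" and x: "x \<in> carrier_vec (d2*d2)"
  shows "conjugate \<psi> \<bullet> vt d1 d2 (Omega_vec d1) x
    = complex_of_real (1 / sqrt (real d1)) * (\<Sum>y<d2*d2. Cc d1 d2 \<psi> y * x $ y)"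
proof -
  have "conjugate \<psi> \<bullet> vt d1 d2 (Omega_vec d1) x = (\<Sum>g<(d1*d2)*(d1*d2). cnj (\<psi> $ g) * vt d1 d2 (Omega_vec d1) x $ g)"
    by (rule ip_expand[OF psi vt_carrier])
  also have "\<dots> = (\<Sum>x1<d1*d1. \<Sum>y<d2*d2. cnj (\<psi> $ enc d1 d2 x1 y) * (Omega_vec d1 $ x1 * x $ y))"
    unfolding sum_reindex_enc by (intro sum.cong refl) (simp add: vt_entry idx_enc)
  also have "\<dots> = (\<Sum>y<d2*d2. \<Sum>x1<d1*d1. cnj (\<psi> $ enc d1 d2 x1 y) * (Omega_vec d1 $ x1 * x $ y))"
    by (rule sum.swap)
  also have "\<dots> = (\<Sum>y<d2*d2. complex_of_real (1 / sqrt (real d1)) * (Cc d1 d2 \<psi> y * x $ y))"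
  proof (intro sum.cong refl)
    fix y
    have "(\<Sum>x1<d1*d1. cnj (\<psi> $ enc d1 d2 x1 y) * (Omega_vec d1 $ x1 * x $ y))
      = (\<Sum>a<d1. \<Sum>b<d1. cnj (\<psi> $ enc d1 d2 (a*d1+b) y) * (Omega_vec d1 $ (a*d1+b) * x $ y))"
      by (rule sum_pair)
    also have "\<dots> = (\<Sum>a<d1. \<Sum>b<d1. complex_of_real (dl a b) *
        (cnj (\<psi> $ enc d1 d2 (a*d1+b) y) * (complex_of_real (1 / sqrt (real d1)) * x $ y)))"
    proof (intro sum.cong refl)
      fix a b assume "a \<in> {..<d1}" "b \<in> {..<d1}"
      hence ab: "a < d1" "b < d1" by auto
      hence "a*d1+b < d1*d1" using lt_prod_aux by blast
      moreover have "dgi d1 (a*d1+b) = dl a b" unfolding dgi_def dl_def divmod_aux[OF ab(2)] ..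
      ultimately show "cnj (\<psi> $ enc d1 d2 (a*d1+b) y) * (Omega_vec d1 $ (a*d1+b) * x $ y)
        = complex_of_real (dl a b) * (cnj (\<psi> $ enc d1 d2 (a*d1+b) y) * (complex_of_real (1 / sqrt (real d1)) * x $ y))"
        by (simp add: Omega_entry)
    qed
    also have "\<dots> = (\<Sum>a<d1. cnj (\<psi> $ enc d1 d2 (a*d1+a) y) * (complex_of_real (1 / sqrt (real d1)) * x $ y))"
      by (intro sum.cong refl, rule sum_dlc, simp)
    also have "\<dots> = complex_of_real (1 / sqrt (real d1)) * (Cc d1 d2 \<psi> y * x $ y)"
      unfolding Cc_def by (simp add: sum_distrib_left sum_distrib_right mult_ac)
    finally show "(\<Sum>x1<d1*d1. cnj (\<psi> $ enc d1 d2 x1 y) * (Omega_vec d1 $ x1 * x $ y))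
       = complex_of_real (1 / sqrt (real d1)) * (Cc d1 d2 \<psi> y * x $ y)" .
  qed
  also have "\<dots> = complex_of_real (1 / sqrt (real d1)) * (\<Sum>y<d2*d2. Cc d1 d2 \<psi> y * x $ y)"
    by (simp add: sum_distrib_left)
  finally show ?thesis .
qed

lemma enc_diag:
  assumes "i < d1" "a < d2" "b < d2"
  shows "enc d1 d2 (i*d1+i) (a*d2+b) = (i*d2+a)*(d1*d2) + (i*d2+b)"
  unfolding enc_def divmod_aux[OF assms(1)] divmod_aux[OF assms(3)] by simp

lemma rank_part:
  assumes psi: "\<psi> \<in> carrier_vec ((d1*d2)*(d1*d2))" and mu: "\<mu> \<noteq> 0"
    and C: "\<And>a b. a < d2 \<Longrightarrow> b < d2 \<Longrightarrow> Cc d1 d2 \<psi> (a*d2+b) = (if a = b then \<mu> else 0)"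
  shows "d2 \<le> d1 * schmidt_rank (d1*d2) (d1*d2) \<psi>"
proof -
  define D where "D = d1*d2"
  define N where "N = ptrace_A D D (ketbra \<psi> \<psi>)"
  have N: "N \<in> carrier_mat D D" by (simp add: N_def ptrace_A_def)
  have psiD: "\<psi> \<in> carrier_vec (D*D)" using psi unfolding D_def .
  have Nentry: "N $$ (b,b') = (\<Sum>a<D. \<psi> $ (a*D+b) * cnj (\<psi> $ (a*D+b')))" if "b < D" "b' < D" for b b'
    unfolding N_def ptrace_A_def using that psiD lt_prod_aux by (simp add: ketbra_entry)
  define W where "W v a = (\<Sum>b<D. cnj (\<psi> $ (a*D+b)) * v $ b)" for v a
  have ker: "W v a = 0" if v: "v \<in> carrier_vec D" "N *\<^sub>v v = 0\<^sub>v D" and a: "a < D" for v a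
  proof -
    have "conjugate v \<bullet> (N *\<^sub>v v) = 0" using v by simp
    moreover have "conjugate v \<bullet> (N *\<^sub>v v) = (\<Sum>a<D. cnj (W v a) * W v a)"
    proof -
      have "conjugate v \<bullet> (N *\<^sub>v v) = (\<Sum>b<D. \<Sum>b'<D. cnj (v $ b) * N $$ (b,b') * v $ b')"
        by (rule qf_expand[OF N v(1)])
      also have "\<dots> = (\<Sum>b<D. \<Sum>b'<D. \<Sum>a<D. (cnj (v $ b) * \<psi> $ (a*D+b)) * (cnj (\<psi> $ (a*D+b')) * v $ b'))"
      proof (intro sum.cong refl)
        fix b b' assume "b \<in> {..<D}" "b' \<in> {..<D}"
        hence bb: "b < D" "b' < D" by auto
        show "cnj (v $ b) * N $$ (b,b') * v $ b' = (\<Sum>a<D. (cnj (v $ b) * \<psi> $ (a*D+b)) * (cnj (\<psi> $ (a*D+b')) * v $ b'))"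
          unfolding Nentry[OF bb] by (simp add: sum_distrib_left sum_distrib_right mult.assoc)
      qed
      also have "\<dots> = (\<Sum>a<D. (\<Sum>b<D. cnj (v $ b) * \<psi> $ (a*D+b)) * (\<Sum>b'<D. cnj (\<psi> $ (a*D+b')) * v $ b'))"
      proof -
        have "(\<Sum>b<D. \<Sum>b'<D. \<Sum>a<D. (cnj (v $ b) * \<psi> $ (a*D+b)) * (cnj (\<psi> $ (a*D+b')) * v $ b'))
          = (\<Sum>b<D. \<Sum>a<D. \<Sum>b'<D. (cnj (v $ b) * \<psi> $ (a*D+b)) * (cnj (\<psi> $ (a*D+b')) * v $ b'))"
          by (rule sum.cong[OF refl], rule sum.swap)
        also have "\<dots> = (\<Sum>a<D. \<Sum>b<D. \<Sum>b'<D. (cnj (v $ b) * \<psi> $ (a*D+b)) * (cnj (\<psi> $ (a*D+b')) * v $ b'))"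
          by (rule sum.swap)
        also have "\<dots> = (\<Sum>a<D. (\<Sum>b<D. cnj (v $ b) * \<psi> $ (a*D+b)) * (\<Sum>b'<D. cnj (\<psi> $ (a*D+b')) * v $ b'))"
          by (rule sum.cong[OF refl], rule sum_product[symmetric])
        finally show ?thesis .
      qed
      also have "\<dots> = (\<Sum>a<D. cnj (W v a) * W v a)"
        unfolding W_def by (simp add: mult.commute)
      finally show ?thesis .
    qed
    ultimately have "(\<Sum>a<D. cnj (W v a) * W v a) = 0" by simp
    moreover have "(\<Sum>a<D. cnj (W v a) * W v a) = complex_of_real (\<Sum>a<D. (cmod (W v a))\<^sup>2)"
      unfolding of_real_sum by (intro sum.cong refl) (metis complex_norm_square mult.commute)
    ultimately have "complex_of_real (\<Sum>a<D. (cmod (W v a))\<^sup>2) = 0" by simp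
    hence "(\<Sum>a<D. (cmod (W v a))\<^sup>2) = 0" by (simp only: of_real_eq_0_iff)
    hence "\<forall>a\<in>{..<D}. (cmod (W v a))\<^sup>2 = 0" by (subst sum_nonneg_eq_0_iff[symmetric]) auto
    thus ?thesis using a by simp
  qed
  define Ai where "Ai i = mat d2 D (\<lambda>(a2,b). cnj (\<psi> $ ((i*d2+a2)*D + b)))" for i
  define Mi where "Mi i = mat d2 d2 (\<lambda>(a2,b2). cnj (\<psi> $ enc d1 d2 (i*d1+i) (a2*d2+b2)))" for i
  have rA: "vec_space.rank d2 (Ai i) \<le> vec_space.rank D N" if i: "i < d1" for i
  proof (rule rank_kernel_mono[of _ d2 D N D])
    show "Ai i \<in> carrier_mat d2 D" by (simp add: Ai_def)
    show "N \<in> carrier_mat D D" by (rule N)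
    fix v assume v: "v \<in> carrier_vec D" "N *\<^sub>v v = 0\<^sub>v D"
    show "Ai i *\<^sub>v v = 0\<^sub>v d2"
    proof (rule eq_vecI)
      fix a2 assume "a2 < dim_vec (0\<^sub>v d2 :: complex vec)"
      hence a2: "a2 < d2" by simp
      have "i*d2+a2 < D" unfolding D_def using lt_prod_aux i a2 by blast
      hence "W v (i*d2+a2) = 0" using ker v by blast
      thus "(Ai i *\<^sub>v v) $ a2 = 0\<^sub>v d2 $ a2"
        using a2 v(1) unfolding W_def Ai_def by (simp add: scalar_prod_def atLeast0LessThan)
    qed (simp add: Ai_def)
  qed
  have rM: "vec_space.rank d2 (Mi i) \<le> vec_space.rank d2 (Ai i)" if i: "i < d1" for i
  proof (rule vec_space.rank_cols_subset)
    show "Mi i \<in> carrier_mat d2 d2" by (simp add: Mi_def)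
    show "Ai i \<in> carrier_mat d2 D" by (simp add: Ai_def)
    show "set (cols (Mi i)) \<subseteq> set (cols (Ai i))"
    proof
      fix c assume "c \<in> set (cols (Mi i))"
      then obtain b2 where k: "b2 < length (cols (Mi i))" "c = cols (Mi i) ! b2"
        by (auto simp: in_set_conv_nth)
      hence b2: "b2 < d2" "c = col (Mi i) b2" by (auto simp: Mi_def)
      have ib: "i*d2+b2 < D" unfolding D_def using lt_prod_aux i b2 by blast
      have "c = col (Ai i) (i*d2+b2)"
        unfolding b2(2) Mi_def Ai_def using ib b2 i by (auto simp: enc_diag D_def)
      moreover have "cols (Ai i) ! (i*d2+b2) = col (Ai i) (i*d2+b2)" using ib by (simp add: Ai_def)
      moreover have "i*d2+b2 < length (cols (Ai i))" using ib by (simp add: Ai_def)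
      ultimately show "c \<in> set (cols (Ai i))" by (metis nth_mem)
    qed
  qed
  have sumM: "mat d2 d2 (\<lambda>(a,b). \<Sum>i<d1. cnj (\<psi> $ enc d1 d2 (i*d1+i) (a*d2+b)))
      = mat d2 d2 (\<lambda>(a,b). if a = b then \<mu> else 0)"
    by (rule eq_matI) (auto simp: C[unfolded Cc_def])
  have "d2 = vec_space.rank d2 (mat d2 d2 (\<lambda>(a,b). if a = b then \<mu> else 0))"
    using rank_scalar_id[OF mu] by simp
  also have "\<dots> \<le> (\<Sum>i<d1. vec_space.rank d2 (mat d2 d2 (\<lambda>(a,b). cnj (\<psi> $ enc d1 d2 (i*d1+i) (a*d2+b)))))"
    unfolding sumM[symmetric] by (rule rank_mat_sum)
  also have "\<dots> \<le> (\<Sum>i<d1. vec_space.rank D N)"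
  proof (rule sum_mono)
    fix i assume "i \<in> {..<d1}"
    hence i: "i < d1" by simp
    show "vec_space.rank d2 (mat d2 d2 (\<lambda>(a,b). cnj (\<psi> $ enc d1 d2 (i*d1+i) (a*d2+b)))) \<le> vec_space.rank D N"
      using rM[OF i] rA[OF i] unfolding Mi_def by simp
  qed
  also have "\<dots> = d1 * schmidt_rank (d1*d2) (d1*d2) \<psi>"
    unfolding schmidt_rank_def N_def D_def by simp
  finally show ?thesis .
qed

lemma sum_d1: "y1 < m \<Longrightarrow> (\<Sum>y<m. f y * complex_of_real (dl y1 y)) = f y1"
  using sum_dlc[of y1 m f] by (simp add: mult.commute)

lemma sum_dd: "y1 < m \<Longrightarrow> y2 < m \<Longrightarrow>
  (\<Sum>y<m. f y * complex_of_real (dl y1 y - dl y2 y)) = f y1 - f y2"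
proof -
  assume y: "y1 < m" "y2 < m"
  have "(\<Sum>y<m. f y * complex_of_real (dl y1 y - dl y2 y))
     = (\<Sum>y<m. f y * complex_of_real (dl y1 y)) - (\<Sum>y<m. f y * complex_of_real (dl y2 y))"
    by (simp add: sum_subtractf algebra_simps)
  thus ?thesis using sum_d1[OF y(1)] sum_d1[OF y(2)] by simp
qed

lemma lower_bound:
  assumes d: "2 \<le> d1" "1 \<le> d2"
    and Z: "Zop d1 d2 = mixture ((d1*d2)*(d1*d2)) ps"
    and ps: "\<forall>(p,\<psi>)\<in>set ps. p > 0 \<and> \<psi> \<in> carrier_vec ((d1*d2)*(d1*d2))"
  shows "\<exists>(p,\<psi>)\<in>set ps. d2 \<le> d1 * schmidt_rank (d1*d2) (d1*d2) \<psi>"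
proof -
  have d0: "d1 > 0" "d2 > 0" using d by auto
  have cps: "\<forall>(p,\<psi>)\<in>set ps. \<psi> \<in> carrier_vec ((d1*d2)*(d1*d2))" using ps by auto
  have cpos: "cc d1 d2 > 0" unfolding cc_def using d by simp
  have qf: "(\<Sum>(p,\<psi>)\<leftarrow>ps. p * (cmod (conjugate \<psi> \<bullet> vt d1 d2 (Omega_vec d1) x))\<^sup>2)
      = cc d1 d2 * (cmod (conjugate (Omega_vec d2) \<bullet> x))\<^sup>2" if x: "x \<in> carrier_vec (d2*d2)" for x
  proof -
    have w: "vt d1 d2 (Omega_vec d1) x \<in> carrier_vec ((d1*d2)*(d1*d2))" by (rule vt_carrier)
    have "complex_of_real (\<Sum>(p,\<psi>)\<leftarrow>ps. p * (cmod (conjugate \<psi> \<bullet> vt d1 d2 (Omega_vec d1) x))\<^sup>2)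
      = complex_of_real (\<Sum>(p,\<psi>)\<leftarrow>LZ d1 d2. p * (cmod (conjugate \<psi> \<bullet> vt d1 d2 (Omega_vec d1) x))\<^sup>2)"
      using mixture_qf[OF cps w] mixture_qf[OF LZ_carrier w] Z Zop_LZ by metis
    hence "(\<Sum>(p,\<psi>)\<leftarrow>ps. p * (cmod (conjugate \<psi> \<bullet> vt d1 d2 (Omega_vec d1) x))\<^sup>2)
      = (\<Sum>(p,\<psi>)\<leftarrow>LZ d1 d2. p * (cmod (conjugate \<psi> \<bullet> vt d1 d2 (Omega_vec d1) x))\<^sup>2)"
      by (simp only: of_real_eq_iff)
    thus ?thesis using LZ_qf[OF d0 x] by simp
  qed
  have zero: "conjugate \<psi> \<bullet> vt d1 d2 (Omega_vec d1) x = 0"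
    if x: "x \<in> carrier_vec (d2*d2)" "conjugate (Omega_vec d2) \<bullet> x = 0" and pp: "(p,\<psi>) \<in> set ps" for x p \<psi>
  proof -
    let ?f = "\<lambda>(p,\<psi>). p * (cmod (conjugate \<psi> \<bullet> vt d1 d2 (Omega_vec d1) x))\<^sup>2"
    have nn: "\<And>y. y \<in> set (map ?f ps) \<Longrightarrow> 0 \<le> y" using ps by auto
    have "sum_list (map ?f ps) = 0" using qf[OF x(1)] x(2) by simp
    hence "\<forall>y\<in>set (map ?f ps). y = 0" using sum_list_nonneg_eq_0_iff[OF nn] by blast
    hence "?f (p,\<psi>) = 0" using pp by auto
    moreover have "p > 0" using ps pp by auto
    ultimately show ?thesis by simp
  qed
  have "\<exists>(p,\<psi>)\<in>set ps. conjugate \<psi> \<bullet> vt d1 d2 (Omega_vec d1) (Omega_vec d2) \<noteq> 0"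
  proof (rule ccontr)
    assume "\<not> ?thesis"
    hence "(\<Sum>(p,\<psi>)\<leftarrow>ps. p * (cmod (conjugate \<psi> \<bullet> vt d1 d2 (Omega_vec d1) (Omega_vec d2)))\<^sup>2) = 0"
      by (intro sum_list_map_zero) auto
    moreover have "(\<Sum>(p,\<psi>)\<leftarrow>ps. p * (cmod (conjugate \<psi> \<bullet> vt d1 d2 (Omega_vec d1) (Omega_vec d2)))\<^sup>2) = cc d1 d2"
      using qf[OF Omega_carrier] ip_Omega_Omega[OF d0(2)] by simp
    ultimately show False using cpos by simp
  qed
  then obtain p \<psi> where pp: "(p,\<psi>) \<in> set ps" and nz: "conjugate \<psi> \<bullet> vt d1 d2 (Omega_vec d1) (Omega_vec d2) \<noteq> 0"
    by auto
  have psi: "\<psi> \<in> carrier_vec ((d1*d2)*(d1*d2))" using ps pp by auto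
  define C where "C = Cc d1 d2 \<psi>"
  have s1: "complex_of_real (1 / sqrt (real d1)) \<noteq> 0" using d0 by simp
  have ipO: "conjugate \<psi> \<bullet> vt d1 d2 (Omega_vec d1) x = complex_of_real (1 / sqrt (real d1)) * (\<Sum>y<d2*d2. C y * x $ y)"
    if "x \<in> carrier_vec (d2*d2)" for x
    unfolding C_def by (rule ip_vt_Omega[OF psi that])
  have off: "C y0 = 0" if y0: "y0 < d2*d2" "dgi d2 y0 = 0" for y0
  proof -
    define x where "x = vec (d2*d2) (\<lambda>y. complex_of_real (dl y0 y))"
    have xc: "x \<in> carrier_vec (d2*d2)" unfolding x_def by simp
    have "conjugate (Omega_vec d2) \<bullet> x = (\<Sum>y<d2*d2. cnj (Omega_vec d2 $ y) * complex_of_real (dl y0 y))"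
      unfolding ip_expand[OF Omega_carrier xc] by (intro sum.cong refl) (simp add: x_def)
    also have "\<dots> = cnj (Omega_vec d2 $ y0)" by (rule sum_d1[OF y0(1)])
    also have "\<dots> = 0" using y0 by (simp add: Omega_entry)
    finally have "conjugate \<psi> \<bullet> vt d1 d2 (Omega_vec d1) x = 0" using zero[OF xc _ pp] by blast
    moreover have "(\<Sum>y<d2*d2. C y * x $ y) = C y0"
      unfolding x_def using sum_d1[OF y0(1), of C] by simp
    ultimately show ?thesis using ipO[OF xc] s1 by simp
  qed
  have diag: "C (k*d2+k) = C (l*d2+l)" if kl: "k < d2" "l < d2" for k l
  proof -
    have yk: "k*d2+k < d2*d2" and yl: "l*d2+l < d2*d2" using lt_prod_aux kl by blast+
    define x where "x = vec (d2*d2) (\<lambda>y. complex_of_real (dl (k*d2+k) y - dl (l*d2+l) y))"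
    have xc: "x \<in> carrier_vec (d2*d2)" unfolding x_def by simp
    have dk: "dgi d2 (k*d2+k) = 1" "dgi d2 (l*d2+l) = 1"
      unfolding dgi_def using divmod_aux kl by auto
    have "conjugate (Omega_vec d2) \<bullet> x = (\<Sum>y<d2*d2. cnj (Omega_vec d2 $ y) * complex_of_real (dl (k*d2+k) y - dl (l*d2+l) y))"
      unfolding ip_expand[OF Omega_carrier xc] by (intro sum.cong refl) (simp add: x_def)
    also have "\<dots> = cnj (Omega_vec d2 $ (k*d2+k)) - cnj (Omega_vec d2 $ (l*d2+l))" by (rule sum_dd[OF yk yl])
    also have "\<dots> = 0" using yk yl dk by (simp add: Omega_entry)
    finally have "conjugate \<psi> \<bullet> vt d1 d2 (Omega_vec d1) x = 0" using zero[OF xc _ pp] by blast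
    moreover have "(\<Sum>y<d2*d2. C y * x $ y) = C (k*d2+k) - C (l*d2+l)"
      unfolding x_def using sum_dd[OF yk yl, of C] by simp
    ultimately show ?thesis using ipO[OF xc] s1 by simp
  qed
  define \<mu> where "\<mu> = C 0"
  have Cform: "C (a*d2+b) = (if a = b then \<mu> else 0)" if ab: "a < d2" "b < d2" for a b
  proof (cases "a = b")
    case True
    thus ?thesis using diag[OF ab(1) d0(2)] unfolding \<mu>_def by simp
  next
    case False
    have "a*d2+b < d2*d2" using lt_prod_aux ab by blast
    moreover have "dgi d2 (a*d2+b) = 0" unfolding dgi_def divmod_aux[OF ab(2)] using False by simp
    ultimately show ?thesis using off False by simp
  qed
  have mu: "\<mu> \<noteq> 0"
  proof
    assume m0: "\<mu> = 0"
    have "(\<Sum>y<d2*d2. C y * Omega_vec d2 $ y) = 0"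
    proof (rule sum.neutral, rule ballI)
      fix y assume "y \<in> {..<d2*d2}"
      hence y: "y < d2*d2" by simp
      have q: "y div d2 < d2" "y mod d2 < d2" using div_lt_aux[OF y] by auto
      have ye: "y = (y div d2) * d2 + y mod d2" by simp
      show "C y * Omega_vec d2 $ y = 0"
      proof (cases "dgi d2 y = 0")
        case True thus ?thesis using y by (simp add: Omega_entry)
      next
        case False
        hence "y div d2 = y mod d2" unfolding dgi_def by (auto split: if_splits)
        hence "C y = \<mu>" using Cform[OF q] ye by simp
        thus ?thesis using m0 by simp
      qed
    qed
    hence "conjugate \<psi> \<bullet> vt d1 d2 (Omega_vec d1) (Omega_vec d2) = 0" using ipO[OF Omega_carrier] by simp
    thus False using nz by simp
  qed
  have "d2 \<le> d1 * schmidt_rank (d1*d2) (d1*d2) \<psi>"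
    by (rule rank_part[OF psi mu], unfold C_def[symmetric], rule Cform)
  thus ?thesis using pp by blast
qed


theorem theorem7:
  fixes d1 d2 :: nat
  assumes "2 \<le> d1" and "d1 \<le> d2"
  shows "psd ((d1*d2)*(d1*d2)) (Zop d1 d2)
    \<and> PPT (d1*d2) (d1*d2) (Zop d1 d2)
    \<and> SN (d1*d2) (d1*d2) (partial_transpose (d1*d2) (d1*d2) (Zop d1 d2)) \<le> 4
    \<and> int (SN (d1*d2) (d1*d2) (Zop d1 d2))
        - int (SN (d1*d2) (d1*d2) (partial_transpose (d1*d2) (d1*d2) (Zop d1 d2)))
      \<ge> \<lceil>real d2 / real d1\<rceil> - 4"
proof -
  have d0: "0 < d1" "d1 \<le> d2" "0 < d2" using assms by auto
  have cpos: "cc d1 d2 > 0" unfolding cc_def using assms by simp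
  have LZpos: "\<forall>(p,\<psi>)\<in>set (LZ d1 d2). p > 0 \<and> \<psi> \<in> carrier_vec ((d1*d2)*(d1*d2))"
  proof (clarify)
    fix p \<psi> assume "(p,\<psi>) \<in> set (LZ d1 d2)"
    hence "(p,\<psi>) \<in> set (prodL d1 d2 1 (d1*d1) (\<lambda>_. 1) (nu d1) (d2*d2) (\<lambda>_. 1) (nu d2))
      \<or> (p,\<psi>) = (cc d1 d2, vt d1 d2 (Omega_vec d1) (Omega_vec d2))" unfolding LZ_def by auto
    thus "p > 0 \<and> \<psi> \<in> carrier_vec ((d1*d2)*(d1*d2))"
    proof
      assume "(p,\<psi>) \<in> set (prodL d1 d2 1 (d1*d1) (\<lambda>_. 1) (nu d1) (d2*d2) (\<lambda>_. 1) (nu d2))"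
      then obtain z where "p = 1" "\<psi> = vt d1 d2 (nu d1 (z div (d2*d2))) (nu d2 (z mod (d2*d2)))"
        unfolding set_prodL by auto
      thus ?thesis using vt_carrier by simp
    next
      assume "(p,\<psi>) = (cc d1 d2, vt d1 d2 (Omega_vec d1) (Omega_vec d2))"
      thus ?thesis using cpos vt_carrier by simp
    qed
  qed
  have psdZ: "psd ((d1*d2)*(d1*d2)) (Zop d1 d2)"
    unfolding Zop_LZ by (rule mixture_psd) (use LZpos in auto)
  have ppt: "PPT (d1*d2) (d1*d2) (Zop d1 d2)"
    unfolding PPT_def ZG_LG[OF d0(1,2)]
  proof (rule mixture_psd, clarify)
    fix p \<psi> assume "(p,\<psi>) \<in> set (LG d1 d2)"
    from LG_rank[OF this] show "0 \<le> p \<and> \<psi> \<in> carrier_vec ((d1*d2)*(d1*d2))" by simp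
  qed
  have sng: "SN (d1*d2) (d1*d2) (partial_transpose (d1*d2) (d1*d2) (Zop d1 d2)) \<le> 4"
    by (rule SN_ZG[OF d0(1,2)])
  define P where "P k = (\<exists>ps. Zop d1 d2 = mixture ((d1*d2)*(d1*d2)) ps \<and>
      (\<forall>(p,\<psi>)\<in>set ps. p > 0 \<and> \<psi> \<in> carrier_vec ((d1*d2)*(d1*d2)) \<and> schmidt_rank (d1*d2) (d1*d2) \<psi> \<le> k))" for k
  have srle: "schmidt_rank (d1*d2) (d1*d2) \<psi> \<le> d1*d2" for \<psi>
    unfolding schmidt_rank_def by (rule vec_space.rank_le_nc) (simp add: ptrace_A_def)
  have "P (d1*d2)" unfolding P_def
  proof (rule exI[of _ "LZ d1 d2"], rule conjI[OF Zop_LZ], clarify)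
    fix p \<psi> assume "(p,\<psi>) \<in> set (LZ d1 d2)"
    with LZpos have "p > 0 \<and> \<psi> \<in> carrier_vec ((d1*d2)*(d1*d2))" by auto
    thus "p > 0 \<and> \<psi> \<in> carrier_vec ((d1*d2)*(d1*d2)) \<and> schmidt_rank (d1*d2) (d1*d2) \<psi> \<le> d1*d2"
      using srle by simp
  qed
  hence "P (SN (d1*d2) (d1*d2) (Zop d1 d2))" unfolding SN_def P_def[symmetric] by (rule LeastI)
  then obtain ps where Z: "Zop d1 d2 = mixture ((d1*d2)*(d1*d2)) ps"
    and ps: "\<forall>(p,\<psi>)\<in>set ps. p > 0 \<and> \<psi> \<in> carrier_vec ((d1*d2)*(d1*d2))
       \<and> schmidt_rank (d1*d2) (d1*d2) \<psi> \<le> SN (d1*d2) (d1*d2) (Zop d1 d2)"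
    unfolding P_def by blast
  have ps': "\<forall>(p,\<psi>)\<in>set ps. p > 0 \<and> \<psi> \<in> carrier_vec ((d1*d2)*(d1*d2))"
  proof (clarify)
    fix p \<psi> assume "(p,\<psi>) \<in> set ps"
    with ps show "p > 0 \<and> \<psi> \<in> carrier_vec ((d1*d2)*(d1*d2))" by auto
  qed
  have d21: "1 \<le> d2" using d0 by simp
  from lower_bound[OF assms(1) d21 Z ps'] obtain p \<psi> where pp: "(p,\<psi>) \<in> set ps"
    and le: "d2 \<le> d1 * schmidt_rank (d1*d2) (d1*d2) \<psi>" by auto
  have "d2 \<le> d1 * SN (d1*d2) (d1*d2) (Zop d1 d2)"
  proof -
    from ps pp have "schmidt_rank (d1*d2) (d1*d2) \<psi> \<le> SN (d1*d2) (d1*d2) (Zop d1 d2)" by auto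
    hence "d1 * schmidt_rank (d1*d2) (d1*d2) \<psi> \<le> d1 * SN (d1*d2) (d1*d2) (Zop d1 d2)" by (rule mult_le_mono2)
    thus ?thesis using le by (rule le_trans[rotated])
  qed
  hence "real d2 \<le> real d1 * real (SN (d1*d2) (d1*d2) (Zop d1 d2))" by (metis of_nat_le_iff of_nat_mult)
  hence "real d2 / real d1 \<le> real (SN (d1*d2) (d1*d2) (Zop d1 d2))" using d0 by (simp add: divide_le_eq mult.commute)
  hence "\<lceil>real d2 / real d1\<rceil> \<le> int (SN (d1*d2) (d1*d2) (Zop d1 d2))" by (simp add: ceiling_le_iff)
  thus ?thesis using psdZ ppt sng by linarith
qed

end
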